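(* In the setting of the model $X=ZL^T+E$ with $Z\in\mathcal{S}(N,K)$, $l_{p,k}$ independent with $l_{p,k}\sim g_k$, $e_{n,p}$ i.i.d. $N(0,1/\tau)$, and with $F(\mathbf{g},Z,\tau,q)=\mathbb{E}_q\log p(X\mid Z,L,\tau)-\mathrm{KL}(q\|\mathbf{g})$, define for $\bar L\in\mathcal{M}(P,K)$ $$\tilde F(\mathbf{g},Z,\tau,\bar L):=\sup_{q:\,\mathbb{E}_q(L)=\bar L}F(\mathbf{g},Z,\tau,q),$$ the supremum being over distributions $q$ on $\mathcal{M}(P,K)$ with finite second moments and mean $\bar L$. Then $$\tilde F(\mathbf{g},Z,\tau,\bar L)=-\tau\Big(\tfrac12\|X-Z\bar L^T\|_F^2+\sum_{k=1}^K\sum_{p=1}^P P_{\tau,g_k}(\bar l_{p,k})\Big),$$ where for a distribution $g$ on $\mathbb{R}$ and $\bar l\in\mathbb{R}$, $$P_{\tau,g}(\bar l)=\frac{N}{2K\tau}\log\frac{2\pi}{\tau}+\frac12\inf_{q:\,\mathbb{E}_q[l]=\bar l}\Big(\mathrm{Var}_q(l)+\frac{2}{\tau}\mathrm{KL}(q\|g)\Big),$$ the infimum being over distributions $q$ on $\mathbb{R}$ with mean $\bar l$ and finite variance.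
   Context: $\mathcal{M}(N,K)$ is the set of real $N\times K$ matrices and $\mathcal{S}(N,K)=\{M\in\mathcal{M}(N,K):M^TM=I_K\}$. $p(X\mid Z,L,\tau)=\prod_{n,p}N(x_{n,p};(ZL^T)_{n,p},1/\tau)$, $\mathbf{g}=(g_1,\dots,g_K)$ with $\mathbf{g}(L)=\prod_{p,k}g_k(l_{p,k})$, and $\mathrm{KL}(q\|g)=\mathbb{E}_q[\log(q/g)]$. *)

theory Defs
  imports "HOL-Probability.Probability"
begin

text \<open>Matrices are represented as functions on finite index types:
  X n p (N x P), Z n k (N x K), L p k (P x K).\<close>

definition KL :: "'a measure \<Rightarrow> 'a measure \<Rightarrow> ereal" where
  "KL q g = (if absolutely_continuous g q \<and> sets q = sets g \<and>
                 integrable q (\<lambda>x. ln (enn2real (RN_deriv g q x)))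
             then ereal (\<integral>x. ln (enn2real (RN_deriv g q x)) \<partial>q) else \<infinity>)"

definition orthonormal_cols :: "('n::finite \<Rightarrow> 'k::finite \<Rightarrow> real) \<Rightarrow> bool" where
  "orthonormal_cols Z \<longleftrightarrow> (\<forall>k k'. (\<Sum>n\<in>UNIV. Z n k * Z n k') = (if k = k' then 1 else 0))"

definition ZLt :: "('n::finite \<Rightarrow> 'k::finite \<Rightarrow> real) \<Rightarrow> ('p::finite \<Rightarrow> 'k \<Rightarrow> real) \<Rightarrow> 'n \<Rightarrow> 'p \<Rightarrow> real" where
  "ZLt Z L n p = (\<Sum>k\<in>UNIV. Z n k * L p k)"

definition frob_sq :: "('n::finite \<Rightarrow> 'p::finite \<Rightarrow> real) \<Rightarrow> ('n \<Rightarrow> 'k::finite \<Rightarrow> real) \<Rightarrow> ('p \<Rightarrow> 'k \<Rightarrow> real) \<Rightarrow> real" where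
  "frob_sq X Z L = (\<Sum>n\<in>UNIV. \<Sum>p\<in>UNIV. (X n p - ZLt Z L n p)\<^sup>2)"

definition lik :: "('n::finite \<Rightarrow> 'p::finite \<Rightarrow> real) \<Rightarrow> ('n \<Rightarrow> 'k::finite \<Rightarrow> real) \<Rightarrow> ('p \<Rightarrow> 'k \<Rightarrow> real) \<Rightarrow> real \<Rightarrow> real" where
  "lik X Z L \<tau> = (\<Prod>n\<in>UNIV. \<Prod>p\<in>UNIV. normal_density (ZLt Z L n p) (sqrt (1 / \<tau>)) (X n p))"

definition Lspace :: "('p::finite \<Rightarrow> 'k::finite \<Rightarrow> real) measure" where
  "Lspace = (\<Pi>\<^sub>M p\<in>UNIV. \<Pi>\<^sub>M k\<in>UNIV. (borel :: real measure))"

definition prior :: "('k::finite \<Rightarrow> real measure) \<Rightarrow> ('p::finite \<Rightarrow> 'k \<Rightarrow> real) measure" where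
  "prior g = (\<Pi>\<^sub>M p\<in>UNIV. \<Pi>\<^sub>M k\<in>UNIV. g k)"

definition Fobj :: "('n::finite \<Rightarrow> 'p::finite \<Rightarrow> real) \<Rightarrow> ('k::finite \<Rightarrow> real measure) \<Rightarrow>
    ('n \<Rightarrow> 'k \<Rightarrow> real) \<Rightarrow> real \<Rightarrow> ('p \<Rightarrow> 'k \<Rightarrow> real) measure \<Rightarrow> ereal" where
  "Fobj X g Z \<tau> q = ereal (\<integral>L. ln (lik X Z L \<tau>) \<partial>q) - KL q (prior g)"

definition admissible_L :: "('p::finite \<Rightarrow> 'k::finite \<Rightarrow> real) \<Rightarrow> ('p \<Rightarrow> 'k \<Rightarrow> real) measure \<Rightarrow> bool" where
  "admissible_L Lbar q \<longleftrightarrow> prob_space q \<and> sets q = sets Lspace \<and>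
     (\<forall>p k. integrable q (\<lambda>L. (L p k)\<^sup>2) \<and> (\<integral>L. L p k \<partial>q) = Lbar p k)"

definition Ftilde :: "('n::finite \<Rightarrow> 'p::finite \<Rightarrow> real) \<Rightarrow> ('k::finite \<Rightarrow> real measure) \<Rightarrow>
    ('n \<Rightarrow> 'k \<Rightarrow> real) \<Rightarrow> real \<Rightarrow> ('p \<Rightarrow> 'k \<Rightarrow> real) \<Rightarrow> ereal" where
  "Ftilde X g Z \<tau> Lbar = (SUP q \<in> {q. admissible_L Lbar q}. Fobj X g Z \<tau> q)"

definition admissible_1 :: "real \<Rightarrow> real measure \<Rightarrow> bool" where
  "admissible_1 lbar q \<longleftrightarrow> prob_space q \<and> sets q = sets borel \<and>
     integrable q (\<lambda>l. l\<^sup>2) \<and> (\<integral>l. l \<partial>q) = lbar"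

definition Ppen :: "nat \<Rightarrow> nat \<Rightarrow> real \<Rightarrow> real measure \<Rightarrow> real \<Rightarrow> ereal" where
  "Ppen N K \<tau> g lbar =
     ereal (real N / (2 * real K * \<tau>) * ln (2 * pi / \<tau>)) +
     ereal (1/2) * (INF q \<in> {q. admissible_1 lbar q}.
        ereal (\<integral>l. (l - (\<integral>l'. l' \<partial>q))\<^sup>2 \<partial>q) + ereal (2 / \<tau>) * KL q g)"

end

theory Submission
  imports Defs
begin



lemma ln_lik:
  fixes X :: "'n::finite \<Rightarrow> 'p::finite \<Rightarrow> real" and Z :: "'n \<Rightarrow> 'k::finite \<Rightarrow> real"
  assumes "\<tau> > 0"
  shows "ln (lik X Z L \<tau>) = - (real CARD('n) * real CARD('p) / 2) * ln (2 * pi / \<tau>) - \<tau> / 2 * frob_sq X Z L"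
proof -
  have nd: "ln (normal_density m (sqrt (1/\<tau>)) x) = - ln (2*pi/\<tau>) / 2 - \<tau>/2 * (x - m)\<^sup>2" for m x
  proof -
    have s: "(sqrt (1/\<tau>))\<^sup>2 = 1/\<tau>" using assms by simp
    have "ln (normal_density m (sqrt (1/\<tau>)) x) = ln (1 / sqrt (2*pi/\<tau>)) + (-(x - m)\<^sup>2 / (2 * (1/\<tau>)))"
      unfolding normal_density_def s using assms
      by (subst ln_mult) (auto simp: ln_exp)
    also have "ln (1 / sqrt (2*pi/\<tau>)) = - ln (2*pi/\<tau>) / 2"
      using assms by (simp add: ln_div ln_sqrt field_simps)
    finally show ?thesis using assms by (simp add: field_simps)
  qed
  have pos: "normal_density m (sqrt (1/\<tau>)) x > 0" for m x
    using assms by (simp add: normal_density_pos)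
  have "ln (lik X Z L \<tau>) = (\<Sum>n\<in>UNIV. \<Sum>p\<in>UNIV. ln (normal_density (ZLt Z L n p) (sqrt (1 / \<tau>)) (X n p)))"
    unfolding lik_def using pos by (simp add: ln_prod prod_pos less_imp_neq[symmetric])
  also have "\<dots> = (\<Sum>n\<in>UNIV. \<Sum>p\<in>UNIV. - ln (2*pi/\<tau>) / 2 - \<tau>/2 * (X n p - ZLt Z L n p)\<^sup>2)"
    by (simp add: nd)
  also have "\<dots> = - (real CARD('n) * real CARD('p) / 2) * ln (2 * pi / \<tau>) - \<tau> / 2 * frob_sq X Z L"
    unfolding frob_sq_def by (simp add: sum_subtractf sum_distrib_left)
  finally show ?thesis .
qed

lemma frob_expand:
  fixes X :: "'n::finite \<Rightarrow> 'p::finite \<Rightarrow> real" and Z :: "'n \<Rightarrow> 'k::finite \<Rightarrow> real"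
  assumes "orthonormal_cols Z"
  shows "frob_sq X Z L = frob_sq X Z Lb
    - 2 * (\<Sum>n\<in>UNIV. \<Sum>p\<in>UNIV. (X n p - ZLt Z Lb n p) * (\<Sum>k\<in>UNIV. Z n k * (L p k - Lb p k)))
    + (\<Sum>p\<in>UNIV. \<Sum>k\<in>UNIV. (L p k - Lb p k)\<^sup>2)"
proof -
  define a where "a n p = X n p - ZLt Z Lb n p" for n p
  define D where "D p k = L p k - Lb p k" for p k
  have e: "X n p - ZLt Z L n p = a n p - (\<Sum>k\<in>UNIV. Z n k * D p k)" for n p
    unfolding a_def D_def ZLt_def by (simp add: algebra_simps sum_subtractf)
  have sq: "(\<Sum>k\<in>UNIV. Z n k * D p k)\<^sup>2 = (\<Sum>k\<in>UNIV. \<Sum>k'\<in>UNIV. Z n k * Z n k' * (D p k * D p k'))" for n p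
    by (simp add: power2_eq_square sum_product algebra_simps)
  have orth: "(\<Sum>n\<in>UNIV. Z n k * Z n k') = (if k = k' then 1 else 0)" for k k'
    using assms unfolding orthonormal_cols_def by blast
  have "(\<Sum>n\<in>UNIV. \<Sum>p\<in>UNIV. (\<Sum>k\<in>UNIV. Z n k * D p k)\<^sup>2)
     = (\<Sum>p\<in>UNIV. \<Sum>k\<in>UNIV. \<Sum>k'\<in>UNIV. (\<Sum>n\<in>UNIV. Z n k * Z n k') * (D p k * D p k'))"
  proof -
    have sw: "(\<Sum>n\<in>UNIV. \<Sum>k\<in>UNIV. \<Sum>k'\<in>UNIV. F n k k') = (\<Sum>k\<in>UNIV. \<Sum>k'\<in>UNIV. \<Sum>n\<in>UNIV. F n k k')"
      for F :: "'n \<Rightarrow> 'k \<Rightarrow> 'k \<Rightarrow> real"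
      apply (rule trans[OF sum.swap])
      apply (rule sum.cong[OF refl])
      apply (rule sum.swap)
      done
    show ?thesis
      unfolding sq sum_distrib_right
      apply (rule trans[OF sum.swap])
      apply (rule sum.cong[OF refl])
      apply (rule sw)
      done
  qed
  also have "\<dots> = (\<Sum>p\<in>UNIV. \<Sum>k\<in>UNIV. (D p k)\<^sup>2)"
    by (simp add: orth power2_eq_square if_distrib[of "\<lambda>c. c * _"] sum.delta cong: if_cong)
  finally have t3: "(\<Sum>n\<in>UNIV. \<Sum>p\<in>UNIV. (\<Sum>k\<in>UNIV. Z n k * D p k)\<^sup>2) = (\<Sum>p\<in>UNIV. \<Sum>k\<in>UNIV. (D p k)\<^sup>2)" .
  have "frob_sq X Z L = (\<Sum>n\<in>UNIV. \<Sum>p\<in>UNIV. (a n p)\<^sup>2 - 2 * (a n p * (\<Sum>k\<in>UNIV. Z n k * D p k)) + (\<Sum>k\<in>UNIV. Z n k * D p k)\<^sup>2)"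
    unfolding frob_sq_def e by (simp add: power2_diff algebra_simps)
  also have "\<dots> = frob_sq X Z Lb - 2 * (\<Sum>n\<in>UNIV. \<Sum>p\<in>UNIV. a n p * (\<Sum>k\<in>UNIV. Z n k * D p k))
      + (\<Sum>n\<in>UNIV. \<Sum>p\<in>UNIV. (\<Sum>k\<in>UNIV. Z n k * D p k)\<^sup>2)"
    unfolding frob_sq_def a_def by (simp add: sum.distrib sum_subtractf sum_distrib_left)
  finally show ?thesis unfolding t3 by (simp add: a_def D_def)
qed




lemma meas_comp[measurable]:
  "(\<lambda>L. L p k) \<in> borel_measurable (Lspace :: ('p::finite \<Rightarrow> 'k::finite \<Rightarrow> real) measure)"
proof -
  have 1: "(\<lambda>L. L p) \<in> measurable (Pi\<^sub>M UNIV (\<lambda>p. Pi\<^sub>M UNIV (\<lambda>k. borel))) (Pi\<^sub>M UNIV (\<lambda>k::'k. (borel::real measure)))"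
    by (rule measurable_component_singleton) simp
  have 2: "(\<lambda>l. l k) \<in> measurable (Pi\<^sub>M UNIV (\<lambda>k::'k. (borel::real measure))) borel"
    by (rule measurable_component_singleton) simp
  show ?thesis unfolding Lspace_def using measurable_compose[OF 1 2] by simp
qed

lemma meas_comp_q:
  "sets q = sets (Lspace :: ('p::finite \<Rightarrow> 'k::finite \<Rightarrow> real) measure) \<Longrightarrow> (\<lambda>L. L p k) \<in> borel_measurable q"
  using meas_comp measurable_cong_sets by blast



lemma adm_integrable:
  fixes q :: "('p::finite \<Rightarrow> 'k::finite \<Rightarrow> real) measure"
  assumes "admissible_L Lbar q"
  shows "integrable q (\<lambda>L. L p k)" "integrable q (\<lambda>L. (L p k)\<^sup>2)"
    "integrable q (\<lambda>L. (L p k - c)\<^sup>2)"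
proof -
  interpret prob_space q using assms unfolding admissible_L_def by auto
  have m: "(\<lambda>L. L p k) \<in> borel_measurable q"
    using assms meas_comp_q unfolding admissible_L_def by blast
  show sq: "integrable q (\<lambda>L. (L p k)\<^sup>2)" using assms unfolding admissible_L_def by auto
  show i: "integrable q (\<lambda>L. L p k)"
    by (rule square_integrable_imp_integrable[OF m sq])
  have "integrable q (\<lambda>L. (L p k)\<^sup>2 - 2 * c * L p k + c\<^sup>2)"
    using i sq by auto
  then show "integrable q (\<lambda>L. (L p k - c)\<^sup>2)"
    by (simp add: power2_diff algebra_simps)
qed

lemma Eloglik:
  fixes X :: "'n::finite \<Rightarrow> 'p::finite \<Rightarrow> real" and Z :: "'n \<Rightarrow> 'k::finite \<Rightarrow> real"
  assumes tau: "\<tau> > 0" and Z: "orthonormal_cols Z" and q: "admissible_L Lbar q"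
  shows "(\<integral>L. ln (lik X Z L \<tau>) \<partial>q) = - (real CARD('n) * real CARD('p) / 2) * ln (2 * pi / \<tau>)
     - \<tau> / 2 * (frob_sq X Z Lbar + (\<Sum>p\<in>UNIV. \<Sum>k\<in>UNIV. \<integral>L. (L p k - Lbar p k)\<^sup>2 \<partial>q))"
proof -
  interpret prob_space q using q unfolding admissible_L_def by auto
  define C0 where "C0 = - (real CARD('n) * real CARD('p) / 2) * ln (2 * pi / \<tau>)"
  define T where "T L = (\<Sum>n\<in>UNIV. \<Sum>p\<in>UNIV. (X n p - ZLt Z Lbar n p) * (\<Sum>k\<in>UNIV. Z n k * (L p k - Lbar p k)))" for L
  define S where "S L = (\<Sum>p\<in>UNIV. \<Sum>k\<in>UNIV. (L p k - Lbar p k)\<^sup>2)" for L :: "'p \<Rightarrow> 'k \<Rightarrow> real"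
  have eq: "ln (lik X Z L \<tau>) = C0 - \<tau>/2 * frob_sq X Z Lbar + \<tau> * T L - \<tau>/2 * S L" for L
    unfolding ln_lik[OF tau] C0_def frob_expand[OF Z, of X L Lbar] T_def S_def by (simp add: algebra_simps)
  have iD: "integrable q (\<lambda>L. L p k - Lbar p k)" for p k
    using adm_integrable(1)[OF q] by auto
  have ED: "(\<integral>L. L p k - Lbar p k \<partial>q) = 0" for p k
    using adm_integrable(1)[OF q] q unfolding admissible_L_def by (simp add: prob_space)
  have iT: "integrable q T" unfolding T_def using iD by auto
  have ET: "integral\<^sup>L q T = 0"
    unfolding T_def using iD ED by (simp add: integral_sum integrable_sum integral_mult_right_zero)
  have iS: "integrable q S" unfolding S_def using adm_integrable(3)[OF q] by auto
  have ES: "integral\<^sup>L q S = (\<Sum>p\<in>UNIV. \<Sum>k\<in>UNIV. \<integral>L. (L p k - Lbar p k)\<^sup>2 \<partial>q)"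
    unfolding S_def using adm_integrable(3)[OF q] by (simp add: integral_sum integrable_sum)
  have "(\<integral>L. ln (lik X Z L \<tau>) \<partial>q) = (\<integral>L. C0 - \<tau>/2 * frob_sq X Z Lbar + \<tau> * T L - \<tau>/2 * S L \<partial>q)"
    by (simp add: eq)
  also have "\<dots> = C0 - \<tau>/2 * frob_sq X Z Lbar + \<tau> * integral\<^sup>L q T - \<tau>/2 * integral\<^sup>L q S"
    using iT iS by (simp add: prob_space)
  finally show ?thesis unfolding ET ES C0_def by (simp add: algebra_simps)
qed




lemma indicator_PiE_UNIV:
  "indicator (Pi\<^sub>E (UNIV::'i::finite set) A) x = (\<Prod>i\<in>UNIV. (indicator (A i) (x i) :: ennreal))"
proof (cases "x \<in> Pi\<^sub>E UNIV A")
  case True then show ?thesis by (auto simp: PiE_iff)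
next
  case False
  then obtain i where "x i \<notin> A i" by (auto simp: PiE_iff)
  then have "(\<Prod>i\<in>UNIV. (indicator (A i) (x i) :: ennreal)) = 0"
    by (intro prod_zero) (auto intro: exI[of _ i])
  then show ?thesis using False by simp
qed

lemma PiM_density:
  fixes M :: "'i::finite \<Rightarrow> 'a measure"
  assumes sf: "\<And>i. sigma_finite_measure (M i)"
    and f[measurable]: "\<And>i. f i \<in> borel_measurable (M i)"
    and sfd: "\<And>i. sigma_finite_measure (density (M i) (f i))"
  shows "PiM UNIV (\<lambda>i. density (M i) (f i)) = density (PiM UNIV M) (\<lambda>x. \<Prod>i\<in>UNIV. f i (x i))"
proof -
  interpret P: product_sigma_finite M using sf by (simp add: product_sigma_finite_def)
  interpret D: product_sigma_finite "\<lambda>i. density (M i) (f i)" using sfd by (simp add: product_sigma_finite_def)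
  have sets_eq: "sets (PiM UNIV (\<lambda>i. density (M i) (f i))) = sets (PiM UNIV M)"
    by (rule sets_PiM_cong) auto
  have meas: "(\<lambda>x. \<Prod>i\<in>UNIV. f i (x i)) \<in> borel_measurable (PiM UNIV M)"
  proof (intro borel_measurable_prod_ennreal)
    fix i :: 'i
    have "(\<lambda>x. x i) \<in> measurable (PiM UNIV M) (M i)" by (rule measurable_component_singleton) simp
    then show "(\<lambda>x. f i (x i)) \<in> borel_measurable (PiM UNIV M)" using measurable_compose f by blast
  qed
  show ?thesis
  proof (rule D.PiM_eqI[symmetric])
    show "finite (UNIV::'i set)" by simp
    show "sets (density (PiM UNIV M) (\<lambda>x. \<Prod>i\<in>UNIV. f i (x i))) = sets (PiM UNIV (\<lambda>i. density (M i) (f i)))"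
      using sets_eq by simp
    fix A assume A: "\<And>i. i \<in> UNIV \<Longrightarrow> A i \<in> sets (density (M i) (f i))"
    then have A': "A i \<in> sets (M i)" for i by simp
    have "emeasure (density (PiM UNIV M) (\<lambda>x. \<Prod>i\<in>UNIV. f i (x i))) (Pi\<^sub>E UNIV A)
        = (\<integral>\<^sup>+ x. (\<Prod>i\<in>UNIV. f i (x i)) * indicator (Pi\<^sub>E UNIV A) x \<partial>PiM UNIV M)"
      by (rule emeasure_density[OF meas]) (auto intro!: sets_PiM_I_finite A')
    also have "\<dots> = (\<integral>\<^sup>+ x. (\<Prod>i\<in>UNIV. f i (x i) * indicator (A i) (x i)) \<partial>PiM UNIV M)"
      by (simp add: indicator_PiE_UNIV prod.distrib)
    also have "\<dots> = (\<Prod>i\<in>UNIV. \<integral>\<^sup>+ y. f i y * indicator (A i) y \<partial>M i)"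
      by (rule P.product_nn_integral_prod) (use A' in auto)
    also have "\<dots> = (\<Prod>i\<in>UNIV. emeasure (density (M i) (f i)) (A i))"
      by (rule prod.cong[OF refl], rule emeasure_density[symmetric]) (auto intro: A')
    finally show "emeasure (density (PiM UNIV M) (\<lambda>x. \<Prod>i\<in>UNIV. f i (x i))) (Pi\<^sub>E UNIV A)
        = (\<Prod>i\<in>UNIV. emeasure (density (M i) (f i)) (A i))" .
  qed
qed

lemma nested_marg:
  fixes Q :: "'p::finite \<Rightarrow> 'k::finite \<Rightarrow> 'a measure"
  assumes Q: "\<And>p k. prob_space (Q p k)"
  shows "distr (PiM UNIV (\<lambda>p. PiM UNIV (\<lambda>k. Q p k))) (Q p k) (\<lambda>L. L p k) = Q p k"
proof -
  have 1: "(\<lambda>L. L p) \<in> measurable (PiM UNIV (\<lambda>p. PiM UNIV (\<lambda>k. Q p k))) (PiM UNIV (\<lambda>k. Q p k))"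
    by (rule measurable_component_singleton) simp
  have 2: "(\<lambda>l. l k) \<in> measurable (PiM UNIV (\<lambda>k. Q p k)) (Q p k)"
    by (rule measurable_component_singleton) simp
  have pp: "prob_space (PiM UNIV (\<lambda>k. Q p k))" for p
    by (rule prob_space_PiM) (rule Q)
  have "distr (PiM UNIV (\<lambda>p. PiM UNIV (\<lambda>k. Q p k))) (Q p k) (\<lambda>L. L p k)
     = distr (distr (PiM UNIV (\<lambda>p. PiM UNIV (\<lambda>k. Q p k))) (PiM UNIV (\<lambda>k. Q p k)) (\<lambda>L. L p)) (Q p k) (\<lambda>l. l k)"
    using 1 2 by (simp add: distr_distr comp_def)
  also have "\<dots> = distr (PiM UNIV (\<lambda>k. Q p k)) (Q p k) (\<lambda>l. l k)"
    using pp by (subst distr_PiM_component) auto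
  also have "\<dots> = Q p k"
    using Q by (subst distr_PiM_component) auto
  finally show ?thesis .
qed




lemma xlnx_bound: "0 \<le> (x::real) \<Longrightarrow> x * max 0 (- ln x) \<le> 1"
proof (cases "x < 1")
  case True
  assume x: "0 \<le> x"
  show ?thesis
  proof (cases "x = 0")
    case False
    then have xp: "0 < x" using x by simp
    have "- ln x = ln (1/x)" using xp by (simp add: ln_div)
    also have "\<dots> \<le> 1/x - 1" using xp by (intro ln_le_minus_one) simp
    finally have "x * (- ln x) \<le> x * (1/x - 1)" using xp by (intro mult_left_mono) auto
    also have "\<dots> = 1 - x" using xp by (simp add: field_simps)
    finally show ?thesis using xp by (auto simp: max_def)
  qed simp
next
  case False
  then show ?thesis by (auto simp: max_def)
qed

locale klsetup =
  fixes q g :: "'a measure"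
  assumes pq: "prob_space q" and pg: "prob_space g" and s: "sets q = sets g"
    and ac: "absolutely_continuous g q"
begin

abbreviation r where "r \<equiv> RN_deriv g q"
definition f where "f x = enn2real (r x)"

lemma sp: "space q = space g" using s by (rule sets_eq_imp_space_eq)

lemma meas_g[measurable]: "f \<in> borel_measurable g" unfolding f_def by measurable

lemma meas_q[measurable]: "f \<in> borel_measurable q"
  using meas_g measurable_cong_sets[OF s refl] by blast

lemma q_dens: "density g r = q"
proof -
  interpret prob_space g by (rule pg)
  show ?thesis using ac s by (rule density_RN_deriv)
qed

lemma AE_fin_g: "AE x in g. r x \<noteq> \<infinity>"
proof -
  interpret prob_space g by (rule pg)
  interpret Q: prob_space q by (rule pq)
  show ?thesis by (rule RN_deriv_finite[OF _ ac s]) unfold_locales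
qed

lemma AE_q: "AE x in q. 0 < f x"
proof -
  have "AE x in density g r. 0 < r x \<longrightarrow> 0 < f x"
    using AE_fin_g by (subst AE_density) (auto simp: f_def enn2real_positive_iff top.not_eq_extremum)
  then have "AE x in density g r. 0 < f x"
  proof -
    have "AE x in density g r. 0 < r x" by (subst AE_density) auto
    then show ?thesis using \<open>AE x in density g r. 0 < r x \<longrightarrow> 0 < f x\<close> by eventually_elim auto
  qed
  then show ?thesis by (simp only: q_dens)
qed

lemma nn_q: assumes [measurable]: "u \<in> borel_measurable g"
  shows "(\<integral>\<^sup>+x. u x \<partial>q) = (\<integral>\<^sup>+x. r x * u x \<partial>g)"
  by (subst q_dens[symmetric], rule nn_integral_density) auto

lemma r_mult_le: "r x * ennreal (v / f x) \<le> ennreal v" if "0 \<le> v"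
proof (cases "r x = \<infinity>")
  case True then show ?thesis by (simp add: f_def)
next
  case False
  then have "r x = ennreal (f x)" by (simp add: f_def ennreal_enn2real_if)
  moreover have "f x * (v / f x) \<le> v" using that by (cases "f x = 0") auto
  moreover have "0 \<le> f x" by (simp add: f_def)
  ultimately show ?thesis using that by (simp add: ennreal_mult'[symmetric] ennreal_leI)
qed

lemma neg_part: "(\<integral>\<^sup>+x. ennreal (max 0 (- ln (f x))) \<partial>q) \<le> 1"
proof -
  interpret prob_space g by (rule pg)
  have "(\<integral>\<^sup>+x. ennreal (max 0 (- ln (f x))) \<partial>q) = (\<integral>\<^sup>+x. r x * ennreal (max 0 (- ln (f x))) \<partial>g)"
    by (rule nn_q) measurable
  also have "\<dots> \<le> (\<integral>\<^sup>+x. 1 \<partial>g)"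
  proof (rule nn_integral_mono_AE)
    show "AE x in g. r x * ennreal (max 0 (- ln (f x))) \<le> 1"
      using AE_fin_g
    proof eventually_elim
      case (elim x)
      then have "r x = ennreal (f x)" by (simp add: f_def ennreal_enn2real_if)
      moreover have "0 \<le> f x" by (simp add: f_def)
      ultimately have "r x * ennreal (max 0 (- ln (f x))) = ennreal (f x * max 0 (- ln (f x)))"
        by (simp add: ennreal_mult')
      also have "\<dots> \<le> ennreal 1" using xlnx_bound[of "f x"] \<open>0 \<le> f x\<close> by (intro ennreal_leI) auto
      finally show ?case by simp
    qed
  qed
  also have "\<dots> = 1" by (simp add: emeasure_space_1)
  finally show ?thesis .
qed

lemma neg_integrable: "integrable q (\<lambda>x. max 0 (- ln (f x)))"
  by (rule integrableI_nonneg) (use neg_part in \<open>auto simp: top.not_eq_extremum intro: le_less_trans\<close>)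


lemma KL_eq: "KL q g = (if integrable q (\<lambda>x. ln (f x)) then ereal (\<integral>x. ln (f x) \<partial>q) else \<infinity>)"
  unfolding KL_def f_def using ac s by simp

lemma gibbs:
  assumes hm[measurable]: "h \<in> borel_measurable g" and hpos: "\<And>x. 0 < h x"
    and hint: "(\<integral>\<^sup>+x. ennreal (h x) \<partial>g) \<le> ennreal C" and C: "0 \<le> C"
    and ilh: "integrable q (\<lambda>x. ln (h x))"
  shows "ereal (\<integral>x. ln (h x) \<partial>q) \<le> KL q g + ereal (C - 1)"
proof (cases "integrable q (\<lambda>x. ln (f x))")
  case False then show ?thesis by (simp add: KL_eq)
next
  case True
  interpret Q: prob_space q by (rule pq)
  have hmq[measurable]: "h \<in> borel_measurable q" using hm measurable_cong_sets[OF s refl] by blast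
  define u where "u x = h x / f x" for x
  have um[measurable]: "u \<in> borel_measurable q" unfolding u_def by measurable
  have "(\<integral>\<^sup>+x. ennreal (u x) \<partial>q) = (\<integral>\<^sup>+x. r x * ennreal (u x) \<partial>g)"
    by (rule nn_q) (unfold u_def, measurable)
  also have "\<dots> \<le> (\<integral>\<^sup>+x. ennreal (h x) \<partial>g)"
    by (rule nn_integral_mono) (unfold u_def, rule r_mult_le, use hpos less_imp_le in auto)
  also have "\<dots> \<le> ennreal C" by (rule hint)
  finally have nu: "(\<integral>\<^sup>+x. ennreal (u x) \<partial>q) \<le> ennreal C" .
  have unn: "0 \<le> u x" for x unfolding u_def f_def using hpos[of x] by (auto intro: divide_nonneg_nonneg less_imp_le)
  have iu: "integrable q u"
    by (rule integrableI_nonneg) (use nu unn in \<open>auto simp: top.not_eq_extremum intro: le_less_trans\<close>)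
  have Eu: "(\<integral>x. u x \<partial>q) \<le> C"
  proof -
    have "(\<integral>x. u x \<partial>q) = enn2real (\<integral>\<^sup>+x. ennreal (u x) \<partial>q)"
      by (rule integral_eq_nn_integral) (auto simp: unn)
    also have "\<dots> \<le> enn2real (ennreal C)"
      using nu by (intro enn2real_mono) auto
    finally show ?thesis using C by simp
  qed
  have "(\<integral>x. ln (h x) - ln (f x) \<partial>q) \<le> (\<integral>x. u x - 1 \<partial>q)"
  proof (rule integral_mono_AE)
    show "integrable q (\<lambda>x. ln (h x) - ln (f x))" using ilh True by auto
    show "integrable q (\<lambda>x. u x - 1)" using iu by auto
    show "AE x in q. ln (h x) - ln (f x) \<le> u x - 1"
      using AE_q
    proof eventually_elim
      case (elim x)
      have "ln (h x) - ln (f x) = ln (u x)" unfolding u_def using elim hpos[of x] by (simp add: ln_div)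
      also have "\<dots> \<le> u x - 1" using elim hpos[of x] by (intro ln_le_minus_one) (simp add: u_def)
      finally show ?case .
    qed
  qed
  then have "(\<integral>x. ln (h x) \<partial>q) - (\<integral>x. ln (f x) \<partial>q) \<le> (\<integral>x. u x \<partial>q) - 1"
    using ilh True iu by (simp add: Q.prob_space)
  then show ?thesis using Eu True by (simp add: KL_eq)
qed

lemma KL_nonneg_ac: "0 \<le> KL q g"
proof -
  interpret prob_space g by (rule pg)
  interpret Q: prob_space q by (rule pq)
  have "ereal (\<integral>x. ln ((\<lambda>x. 1::real) x) \<partial>q) \<le> KL q g + ereal (1 - 1)"
    by (rule gibbs) (auto simp: emeasure_space_1)
  then show ?thesis by (simp add: zero_ereal_def)
qed

end

lemma KL_nonneg:
  assumes "prob_space q" "prob_space g" "sets q = sets g"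
  shows "0 \<le> KL q g"
proof (cases "absolutely_continuous g q")
  case True
  then interpret klsetup q g using assms by (simp add: klsetup_def)
  show ?thesis by (rule KL_nonneg_ac)
qed (simp add: KL_def)




definition clip :: "nat \<Rightarrow> real \<Rightarrow> real" where
  "clip m y = max (min y (real m)) (1 / real m)"

lemma clip_pos: "0 < m \<Longrightarrow> 0 < clip m y"
  unfolding clip_def by (rule less_le_trans[OF _ max.cobounded2]) simp

lemma clip_le: assumes "0 < m" "0 \<le> y" shows "clip m y \<le> y + 1 / real m"
proof -
  have "1 / real m \<le> 1" "1 \<le> real m" "0 < 1 / real m" using assms by auto
  show ?thesis
  proof (cases "y \<le> real m")
    case True
    then have "min y (real m) = y" by simp
    then show ?thesis unfolding clip_def using assms \<open>0 < 1 / real m\<close> by (simp add: max_def)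
  next
    case False
    then have "min y (real m) = real m" by simp
    moreover have "max (real m) (1 / real m) = real m" using \<open>1 / real m \<le> 1\<close> \<open>1 \<le> real m\<close> by (intro max_absorb1) linarith
    ultimately have "clip m y = real m" unfolding clip_def by simp
    then show ?thesis using False \<open>0 < 1 / real m\<close> by linarith
  qed
qed

lemma clip_bounds: "0 < m \<Longrightarrow> 1 / real m \<le> clip m y \<and> clip m y \<le> max (real m) (1 / real m)"
  unfolding clip_def by (auto simp: max_def min_def)

lemma ln_clip:
  assumes y: "0 < y" and m: "1 \<le> m"
  shows "ln (clip m y) = min (max 0 (ln y)) (ln (real m)) - min (max 0 (- ln y)) (ln (real m))"
proof -
  have m0: "0 < real m" using m by simp
  have lm: "0 \<le> ln (real m)" using m by simp
  have lim: "ln (1 / real m) = - ln (real m)" using m0 by (simp add: ln_div)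
  have im: "1 / real m \<le> real m" using m by (simp add: field_simps) (metis of_nat_1 of_nat_mono one_le_power power2_eq_square m)
  show ?thesis
  proof (cases "real m \<le> y")
    case True
    then have "clip m y = real m" unfolding clip_def using im by (auto simp: max_def min_def)
    moreover have "ln (real m) \<le> ln y" using True m0 by simp
    ultimately show ?thesis using lm by (auto simp: max_def min_def)
  next
    case F1: False
    show ?thesis
    proof (cases "1 / real m \<le> y")
      case True
      then have c: "clip m y = y" unfolding clip_def using F1 by (auto simp: max_def min_def)
      have "ln (1 / real m) \<le> ln y" using True m0 y by (subst ln_le_cancel_iff) auto
      moreover have "ln y \<le> ln (real m)" using F1 y by simp
      ultimately show ?thesis unfolding c using lim by (auto simp: max_def min_def)
    next
      case False
      then have c: "clip m y = 1 / real m" unfolding clip_def using im by (auto simp: max_def min_def)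
      have "ln y \<le> ln (1 / real m)" using False m0 y by (subst ln_le_cancel_iff) auto
      then show ?thesis unfolding c using lim lm by (auto simp: max_def min_def)
    qed
  qed
qed

lemma eventually_ln_ge: "\<forall>\<^sub>F n in sequentially. c \<le> ln (real (Suc n))"
proof -
  obtain n0 :: nat where "exp c < real n0" using reals_Archimedean2 by blast
  then have "c \<le> ln (real (Suc n))" if "n0 \<le> n" for n
  proof -
    have "exp c \<le> real (Suc n)" using \<open>exp c < real n0\<close> that by linarith
    then have "ln (exp c) \<le> ln (real (Suc n))" by (subst ln_le_cancel_iff) auto
    then show ?thesis by simp
  qed
  then show ?thesis unfolding eventually_sequentially by blast
qed

lemma min_ln_tendsto: "(\<lambda>n. min z (ln (real (Suc n)))) \<longlonglongrightarrow> z"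
proof (rule tendsto_eventually)
  show "\<forall>\<^sub>F n in sequentially. min z (ln (real (Suc n))) = z"
    using eventually_ln_ge[of z] by eventually_elim auto
qed

context klsetup
begin

definition Pp where "Pp x = max 0 (ln (f x))"
definition Nn where "Nn x = max 0 (- ln (f x))"

lemma KL_lim: "(\<lambda>n. ereal (\<integral>x. ln (clip (Suc n) (f x)) \<partial>q)) \<longlonglongrightarrow> KL q g"
proof -
  interpret Q: prob_space q by (rule pq)
  have [measurable]: "Pp \<in> borel_measurable q" "Nn \<in> borel_measurable q"
    unfolding Pp_def Nn_def by measurable
  define A where "A n = (\<integral>x. min (Pp x) (ln (real (Suc n))) \<partial>q)" for n
  define B where "B n = (\<integral>x. min (Nn x) (ln (real (Suc n))) \<partial>q)" for n
  have bdd: "integrable q (\<lambda>x. min (h x) (ln (real (Suc n))))" if [measurable]: "h \<in> borel_measurable q"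
    and h0: "\<And>x. 0 \<le> h x" for h n
  proof (rule Q.integrable_const_bound[where B="ln (real (Suc n))"])
    show "AE x in q. norm (min (h x) (ln (real (Suc n)))) \<le> ln (real (Suc n))"
    proof (intro AE_I2)
      fix x show "norm (min (h x) (ln (real (Suc n)))) \<le> ln (real (Suc n))"
        using h0[of x] by (auto simp: min_def)
    qed
  qed measurable
  have PN0: "0 \<le> Pp x" "0 \<le> Nn x" for x unfolding Pp_def Nn_def by auto
  have iA: "integrable q (\<lambda>x. min (Pp x) (ln (real (Suc n))))" for n by (rule bdd) (auto simp: PN0)
  have iB: "integrable q (\<lambda>x. min (Nn x) (ln (real (Suc n))))" for n by (rule bdd) (auto simp: PN0)
  have a_eq: "(\<integral>x. ln (clip (Suc n) (f x)) \<partial>q) = A n - B n" for n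
  proof -
    have "(\<integral>x. ln (clip (Suc n) (f x)) \<partial>q) = (\<integral>x. min (Pp x) (ln (real (Suc n))) - min (Nn x) (ln (real (Suc n))) \<partial>q)"
    proof (rule integral_cong_AE)
      show "AE x in q. ln (clip (Suc n) (f x)) = min (Pp x) (ln (real (Suc n))) - min (Nn x) (ln (real (Suc n)))"
        using AE_q by (rule eventually_mono) (simp add: Pp_def Nn_def ln_clip)
    qed (unfold clip_def Pp_def Nn_def, measurable)
    then show ?thesis unfolding A_def B_def using iA iB by simp
  qed
  have iN: "integrable q Nn" unfolding Nn_def by (rule neg_integrable)
  have Blim: "B \<longlonglongrightarrow> (\<integral>x. Nn x \<partial>q)"
    unfolding B_def
  proof (rule integral_dominated_convergence[where w=Nn])
    show "AE x in q. (\<lambda>n. min (Nn x) (ln (real (Suc n)))) \<longlonglongrightarrow> Nn x" by (intro AE_I2 min_ln_tendsto)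
    show "AE x in q. norm (min (Nn x) (ln (real (Suc n)))) \<le> Nn x" for n using PN0 by (auto simp: min_def)
  qed (use iN in auto)
  show ?thesis
  proof (cases "integrable q (\<lambda>x. ln (f x))")
    case True
    have iP: "integrable q Pp" unfolding Pp_def using True by auto
    have Alim: "A \<longlonglongrightarrow> (\<integral>x. Pp x \<partial>q)"
      unfolding A_def
    proof (rule integral_dominated_convergence[where w=Pp])
      show "AE x in q. (\<lambda>n. min (Pp x) (ln (real (Suc n)))) \<longlonglongrightarrow> Pp x" by (intro AE_I2 min_ln_tendsto)
      show "AE x in q. norm (min (Pp x) (ln (real (Suc n)))) \<le> Pp x" for n using PN0 by (auto simp: min_def)
    qed (use iP in auto)
    have "(\<integral>x. Pp x \<partial>q) - (\<integral>x. Nn x \<partial>q) = (\<integral>x. Pp x - Nn x \<partial>q)" using iP iN by simp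
    also have "(\<lambda>x. Pp x - Nn x) = (\<lambda>x. ln (f x))" by (auto simp: Pp_def Nn_def max_def)
    finally have "(\<lambda>n. A n - B n) \<longlonglongrightarrow> (\<integral>x. ln (f x) \<partial>q)" using tendsto_diff[OF Alim Blim] by simp
    then show ?thesis unfolding a_eq KL_eq using True by (simp add: tendsto_ereal)
  next
    case False
    have nP: "\<not> integrable q Pp"
    proof
      assume "integrable q Pp"
      then have "integrable q (\<lambda>x. Pp x - Nn x)" using iN by auto
      moreover have "(\<lambda>x. Pp x - Nn x) = (\<lambda>x. ln (f x))" by (auto simp: Pp_def Nn_def max_def)
      ultimately show False using False by simp
    qed
    have inf: "(\<integral>\<^sup>+x. ennreal (Pp x) \<partial>q) = \<infinity>"
    proof (rule ccontr)
      assume "(\<integral>\<^sup>+x. ennreal (Pp x) \<partial>q) \<noteq> \<infinity>"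
      then have "(\<integral>\<^sup>+x. ennreal (Pp x) \<partial>q) < \<infinity>" by (simp add: less_top)
      then have "integrable q Pp" by (intro integrableI_nonneg) (auto simp: PN0)
      then show False using nP by simp
    qed
    have lim: "(\<lambda>n. \<integral>\<^sup>+x. ennreal (min (Pp x) (ln (real (Suc n)))) \<partial>q) \<longlonglongrightarrow> (\<integral>\<^sup>+x. ennreal (Pp x) \<partial>q)"
    proof (rule nn_integral_LIMSEQ)
      show "incseq (\<lambda>n x. ennreal (min (Pp x) (ln (real (Suc n)))))"
        by (auto simp: incseq_def le_fun_def intro!: ennreal_leI min.mono)
      show "(\<lambda>n. ennreal (min (Pp x) (ln (real (Suc n))))) \<longlonglongrightarrow> ennreal (Pp x)" for x
        by (intro tendsto_ennrealI min_ln_tendsto)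
    qed measurable
    have eq: "(\<integral>\<^sup>+x. ennreal (min (Pp x) (ln (real (Suc n)))) \<partial>q) = ennreal (A n)" for n
      unfolding A_def by (rule nn_integral_eq_integral[OF iA]) (auto simp: PN0)
    from lim have "(\<lambda>n. ennreal (A n)) \<longlonglongrightarrow> top" unfolding eq inf by simp
    then have Atop: "filterlim A at_top sequentially" by (simp add: ennreal_tendsto_top_eq_at_top)
    have Bb: "B n \<le> 1" for n
    proof -
      have "B n \<le> (\<integral>x. Nn x \<partial>q)" unfolding B_def
        by (rule integral_mono[OF iB iN]) auto
      also have "(\<integral>x. Nn x \<partial>q) = enn2real (\<integral>\<^sup>+x. ennreal (Nn x) \<partial>q)"
        by (rule integral_eq_nn_integral) (auto simp: PN0)
      also have "\<dots> \<le> enn2real 1" using neg_part unfolding Nn_def by (intro enn2real_mono) auto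
      finally show ?thesis by simp
    qed
    have "((\<lambda>n. ereal (A n - B n)) \<longlonglongrightarrow> \<infinity>)"
      unfolding tendsto_PInfty
    proof
      fix c
      have "\<forall>\<^sub>F n in sequentially. c + 1 < A n" using Atop by (simp add: filterlim_at_top_dense)
      then show "\<forall>\<^sub>F n in sequentially. ereal c < ereal (A n - B n)"
      proof eventually_elim
        case (elim n) then show ?case using Bb[of n] by simp
      qed
    qed
    then show ?thesis unfolding a_eq KL_eq using False by simp
  qed
qed

end




context klsetup
begin

lemma nn_f_le: "(\<integral>\<^sup>+x. ennreal (f x) \<partial>g) \<le> 1"
proof -
  interpret Q: prob_space q by (rule pq)
  have "(\<integral>\<^sup>+x. ennreal (f x) \<partial>g) \<le> (\<integral>\<^sup>+x. r x \<partial>g)"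
    by (rule nn_integral_mono) (simp add: f_def ennreal_enn2real_if)
  also have "\<dots> = emeasure (density g r) (space g)"
    by (simp add: emeasure_density)
  also have "\<dots> = 1" using q_dens sp Q.emeasure_space_1 by simp
  finally show ?thesis .
qed

lemma nn_clip_le: assumes m: "0 < m"
  shows "(\<integral>\<^sup>+x. ennreal (clip m (f x)) \<partial>g) \<le> ennreal (1 + 1 / real m)"
proof -
  interpret G: prob_space g by (rule pg)
  have f0: "0 \<le> f x" for x by (simp add: f_def)
  have "(\<integral>\<^sup>+x. ennreal (clip m (f x)) \<partial>g) \<le> (\<integral>\<^sup>+x. ennreal (f x) + ennreal (1 / real m) \<partial>g)"
  proof (rule nn_integral_mono)
    fix x
    have "ennreal (clip m (f x)) \<le> ennreal (f x + 1 / real m)" by (rule ennreal_leI, rule clip_le[OF m f0])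
    also have "\<dots> = ennreal (f x) + ennreal (1 / real m)" by (rule ennreal_plus) (auto simp: f0)
    finally show "ennreal (clip m (f x)) \<le> ennreal (f x) + ennreal (1 / real m)" .
  qed
  also have "\<dots> = (\<integral>\<^sup>+x. ennreal (f x) \<partial>g) + (\<integral>\<^sup>+x. ennreal (1 / real m) \<partial>g)"
    by (rule nn_integral_add) auto
  also have "\<dots> \<le> 1 + ennreal (1 / real m)"
    using nn_f_le by (intro add_mono) (auto simp: G.emeasure_space_1)
  also have "\<dots> = ennreal (1 + 1 / real m)" by (simp add: ennreal_plus)
  finally show ?thesis .
qed

end

definition marg :: "('p \<Rightarrow> 'k \<Rightarrow> real) measure \<Rightarrow> 'p \<Rightarrow> 'k \<Rightarrow> real measure" where
  "marg q p k = distr q borel (\<lambda>L. L p k)"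

lemma sets_prior:
  assumes "\<And>k. sets (g k) = sets borel"
  shows "sets (prior g) = sets (Lspace :: ('p::finite \<Rightarrow> 'k::finite \<Rightarrow> real) measure)"
  unfolding prior_def Lspace_def
  by (intro sets_PiM_cong refl) (auto intro!: sets_PiM_cong assms)

lemma prob_prior:
  assumes "\<And>k. prob_space (g k)"
  shows "prob_space (prior g :: ('p::finite \<Rightarrow> 'k::finite \<Rightarrow> real) measure)"
  unfolding prior_def by (intro prob_space_PiM assms)

lemma marg_prior:
  assumes "\<And>k. prob_space (g k)" "\<And>k. sets (g k) = sets borel"
  shows "marg (prior g :: ('p::finite \<Rightarrow> 'k::finite \<Rightarrow> real) measure) p k = g k"
proof -
  have "distr (prior g :: ('p \<Rightarrow> 'k \<Rightarrow> real) measure) (g k) (\<lambda>L. L p k) = g k"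
    unfolding prior_def by (rule nested_marg[where Q="\<lambda>p k. g k"]) (rule assms)
  moreover have "distr (prior g :: ('p \<Rightarrow> 'k \<Rightarrow> real) measure) (g k) (\<lambda>L. L p k) = marg (prior g) p k"
    unfolding marg_def by (rule distr_cong) (auto simp: assms)
  ultimately show ?thesis by simp
qed

lemma marg_ac:
  assumes ac: "absolutely_continuous G q" and s: "sets q = sets G" and T: "T \<in> measurable G borel"
  shows "absolutely_continuous (distr G borel T) (distr q borel T)"
proof -
  have Tq: "T \<in> measurable q borel" using T measurable_cong_sets[OF s refl] by blast
  have sp: "space q = space G" using s by (rule sets_eq_imp_space_eq)
  show ?thesis
    unfolding absolutely_continuous_def
  proof
    fix A assume "A \<in> null_sets (distr G borel T)"
    then have "T -` A \<inter> space G \<in> null_sets G" "A \<in> sets borel" using null_sets_distr_iff[OF T] by auto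
    then have "T -` A \<inter> space q \<in> null_sets q" using ac sp unfolding absolutely_continuous_def by auto
    then show "A \<in> null_sets (distr q borel T)" using null_sets_distr_iff[OF Tq] \<open>A \<in> sets borel\<close> by auto
  qed
qed

lemma marg_klsetup:
  fixes q :: "('p::finite \<Rightarrow> 'k::finite \<Rightarrow> real) measure"
  assumes gp: "\<And>k. prob_space (g k)" and gb: "\<And>k. sets (g k) = sets borel"
    and pq: "prob_space q" and sq: "sets q = sets Lspace" and ac: "absolutely_continuous (prior g) q"
  shows "klsetup (marg q p k) (g k)"
proof -
  interpret Q: prob_space q by (rule pq)
  have sG: "sets (prior g :: ('p \<Rightarrow> 'k \<Rightarrow> real) measure) = sets Lspace" by (rule sets_prior) (rule gb)
  have T: "(\<lambda>L. L p k) \<in> measurable (prior g :: ('p \<Rightarrow> 'k \<Rightarrow> real) measure) borel"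
    using meas_comp measurable_cong_sets[OF sG refl] by blast
  show ?thesis
    unfolding klsetup_def
  proof (intro conjI)
    show "prob_space (marg q p k)" unfolding marg_def by (rule Q.prob_space_distr) (rule meas_comp_q[OF sq])
    show "prob_space (g k)" by (rule gp)
    show "sets (marg q p k) = sets (g k)" by (simp add: marg_def gb)
    have "absolutely_continuous (marg (prior g) p k) (marg q p k)"
      unfolding marg_def by (rule marg_ac[OF ac _ T]) (simp add: sq sG)
    then show "absolutely_continuous (g k) (marg q p k)" by (simp add: marg_prior[OF gp gb])
  qed
qed

lemma ereal_sum_nMinf: "finite S \<Longrightarrow> (\<And>i. i \<in> S \<Longrightarrow> a i \<noteq> -\<infinity>) \<Longrightarrow> sum a S \<noteq> -(\<infinity>::ereal)"
  by (induction S rule: finite_induct) auto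

lemma ereal_sum_lim:
  fixes f :: "'i \<Rightarrow> nat \<Rightarrow> ereal"
  assumes "finite S" "\<And>i. i \<in> S \<Longrightarrow> f i \<longlonglongrightarrow> a i" "\<And>i. i \<in> S \<Longrightarrow> a i \<noteq> -\<infinity>"
  shows "(\<lambda>n. \<Sum>i\<in>S. f i n) \<longlonglongrightarrow> (\<Sum>i\<in>S. a i)"
  using assms
proof (induction S rule: finite_induct)
  case (insert i S)
  have "(\<Sum>j\<in>S. a j) \<noteq> -\<infinity>" using insert by (intro ereal_sum_nMinf) auto
  then show ?case using insert
    by (simp, intro tendsto_add_ereal_general) auto
qed simp




lemma data_ineq:
  fixes q :: "('p::finite \<Rightarrow> 'k::finite \<Rightarrow> real) measure" and g :: "'k \<Rightarrow> real measure"
  assumes gp: "\<And>k. prob_space (g k)" and gb: "\<And>k. sets (g k) = sets borel"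
    and pq: "prob_space q" and sq: "sets q = sets Lspace"
  shows "(\<Sum>p\<in>UNIV. \<Sum>k\<in>UNIV. KL (marg q p k) (g k)) \<le> KL q (prior g)"
proof (cases "absolutely_continuous (prior g) q")
  case False then show ?thesis by (simp add: KL_def)
next
  case ac: True
  let ?G = "prior g :: ('p \<Rightarrow> 'k \<Rightarrow> real) measure"
  have sG: "sets ?G = sets Lspace" by (rule sets_prior) (rule gb)
  interpret K: klsetup q ?G
    unfolding klsetup_def using pq prob_prior[OF gp] sq sG ac by simp
  have mk: "klsetup (marg q p k) (g k)" for p k by (rule marg_klsetup[OF gp gb pq sq ac])
  define fpk where "fpk p k x = enn2real (RN_deriv (g k) (marg q p k) x)" for p k x
  have fpk_f: "fpk p k = klsetup.f (marg q p k) (g k)" for p k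
    unfolding fpk_def by (simp add: klsetup.f_def[OF mk] fun_eq_iff)
  have fm: "fpk p k \<in> borel_measurable borel" for p k
    unfolding fpk_def using measurable_cong_sets[OF gb refl] by (metis borel_measurable_RN_deriv borel_measurable_enn2real measurable_compose)
  define a where "a n p k = (\<integral>x. ln (clip (Suc n) (fpk p k x)) \<partial>(marg q p k))" for n p k
  have lim: "(\<lambda>n. ereal (a n p k)) \<longlonglongrightarrow> KL (marg q p k) (g k)" for p k
    unfolding a_def fpk_f by (rule klsetup.KL_lim[OF mk])
  define c where "c = real CARD('p) * real CARD('k)"
  define h where "h n L = (\<Prod>p\<in>UNIV. \<Prod>k\<in>UNIV. clip (Suc n) (fpk p k (L p k)))" for n L
  have Lm: "(\<lambda>L. L p k) \<in> borel_measurable M" if "sets M = sets Lspace" for M :: "('p \<Rightarrow> 'k \<Rightarrow> real) measure" and p k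
    using that meas_comp measurable_cong_sets by blast
  have cm: "(\<lambda>L. clip (Suc n) (fpk p k (L p k))) \<in> borel_measurable M" if "sets M = sets Lspace" for M :: "('p \<Rightarrow> 'k \<Rightarrow> real) measure" and p k n
  proof -
    have "(\<lambda>L. fpk p k (L p k)) \<in> borel_measurable M" using measurable_compose[OF Lm[OF that] fm] .
    then show ?thesis unfolding clip_def by measurable
  qed
  have bound: "ereal (\<Sum>p\<in>UNIV. \<Sum>k\<in>UNIV. a n p k) \<le> KL q ?G + ereal ((1 + 1 / real (Suc n)) ^ (CARD('p) * CARD('k)) - 1)" for n
  proof -
    have hm: "h n \<in> borel_measurable ?G" unfolding h_def
      by (intro borel_measurable_prod cm sG)
    have hpos: "0 < h n L" for L unfolding h_def by (intro prod_pos) (auto intro: clip_pos)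
    have hint: "(\<integral>\<^sup>+L. ennreal (h n L) \<partial>?G) \<le> ennreal ((1 + 1 / real (Suc n)) ^ (CARD('p) * CARD('k)))"
    proof -
      have sfg: "product_sigma_finite g" unfolding product_sigma_finite_def
        using gp prob_space_imp_sigma_finite by blast
      have sfG: "product_sigma_finite (\<lambda>p::'p. PiM UNIV g)" unfolding product_sigma_finite_def
        using prob_space_PiM[of UNIV g] gp prob_space_imp_sigma_finite by blast
      define cc where "cc = 1 + 1 / real (Suc n)"
      have cc0: "0 \<le> cc" unfolding cc_def by simp
      have cnn: "0 \<le> clip (Suc n) y" for y using clip_pos[of "Suc n" y] by simp
      have fgm: "(\<lambda>x. fpk p k x) \<in> borel_measurable (g k)" for p k
        using fm measurable_cong_sets[OF gb refl] by blast
      have inner: "(\<integral>\<^sup>+l. ennreal (\<Prod>k\<in>UNIV. clip (Suc n) (fpk p k (l k))) \<partial>PiM UNIV g)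
          = (\<Prod>k\<in>UNIV. \<integral>\<^sup>+x. ennreal (clip (Suc n) (fpk p k x)) \<partial>g k)" for p
      proof -
        have "(\<integral>\<^sup>+l. ennreal (\<Prod>k\<in>UNIV. clip (Suc n) (fpk p k (l k))) \<partial>PiM UNIV g)
            = (\<integral>\<^sup>+l. (\<Prod>k\<in>UNIV. ennreal (clip (Suc n) (fpk p k (l k)))) \<partial>PiM UNIV g)"
          by (simp add: prod_ennreal cnn)
        also have "\<dots> = (\<Prod>k\<in>UNIV. \<integral>\<^sup>+x. ennreal (clip (Suc n) (fpk p k x)) \<partial>g k)"
        proof (rule product_sigma_finite.product_nn_integral_prod[OF sfg])
          fix k show "(\<lambda>x. ennreal (clip (Suc n) (fpk p k x))) \<in> borel_measurable (g k)"
            unfolding clip_def by (rule measurable_compose[OF fgm]) measurable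
        qed simp
        finally show ?thesis .
      qed
      have outm: "(\<lambda>l. ennreal (\<Prod>k\<in>UNIV. clip (Suc n) (fpk p k (l k)))) \<in> borel_measurable (PiM UNIV g)" for p
      proof -
        have "(\<lambda>l. l k) \<in> measurable (PiM UNIV g) (g k)" for k by (rule measurable_component_singleton) simp
        then have "(\<lambda>l. fpk p k (l k)) \<in> borel_measurable (PiM UNIV g)" for k using fgm measurable_compose by blast
        then show ?thesis unfolding clip_def by measurable
      qed
      have "(\<integral>\<^sup>+L. ennreal (h n L) \<partial>?G) = (\<integral>\<^sup>+L. (\<Prod>p\<in>UNIV. ennreal (\<Prod>k\<in>UNIV. clip (Suc n) (fpk p k (L p k)))) \<partial>?G)"
        unfolding h_def by (simp add: prod_ennreal cnn prod_nonneg)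
      also have "\<dots> = (\<Prod>p\<in>UNIV. \<integral>\<^sup>+l. ennreal (\<Prod>k\<in>UNIV. clip (Suc n) (fpk p k (l k))) \<partial>PiM UNIV g)"
        unfolding prior_def
      proof (rule product_sigma_finite.product_nn_integral_prod[OF sfG])
        fix p show "(\<lambda>l. ennreal (\<Prod>k\<in>UNIV. clip (Suc n) (fpk p k (l k)))) \<in> borel_measurable (PiM UNIV g)"
          by (rule outm)
      qed simp
      also have "\<dots> = (\<Prod>p\<in>UNIV. \<Prod>k\<in>UNIV. \<integral>\<^sup>+x. ennreal (clip (Suc n) (fpk p k x)) \<partial>g k)"
        by (simp add: inner)
      also have "\<dots> \<le> (\<Prod>p\<in>(UNIV::'p set). \<Prod>k\<in>(UNIV::'k set). ennreal cc)"
        using klsetup.nn_clip_le[OF mk, of "Suc n"] unfolding fpk_f[symmetric] cc_def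
        by (intro prod_mono_ennreal) auto
      also have "\<dots> = ennreal (cc ^ (CARD('p) * CARD('k)))"
        using cc0 by (simp add: ennreal_power power_mult[symmetric] mult.commute)
      finally show ?thesis unfolding cc_def .
    qed
    have lnh: "ln (h n L) = (\<Sum>p\<in>UNIV. \<Sum>k\<in>UNIV. ln (clip (Suc n) (fpk p k (L p k))))" for L
      unfolding h_def by (simp add: ln_prod prod_pos clip_pos less_imp_neq[symmetric])
    have ic: "integrable q (\<lambda>L. ln (clip (Suc n) (fpk p k (L p k))))" for p k
    proof -
      interpret Q: prob_space q by (rule pq)
      show ?thesis
      proof (rule Q.integrable_const_bound[where B="ln (real (Suc n))"])
        show "AE L in q. norm (ln (clip (Suc n) (fpk p k (L p k)))) \<le> ln (real (Suc n))"
        proof (intro AE_I2)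
          fix L
          define y where "y = clip (Suc n) (fpk p k (L p k))"
          have b: "1 / real (Suc n) \<le> y" "y \<le> max (real (Suc n)) (1 / real (Suc n))"
            using clip_bounds[of "Suc n"] unfolding y_def by auto
          have mx: "max (real (Suc n)) (1 / real (Suc n)) = real (Suc n)"
            by (intro max_absorb1) (simp add: field_simps)
          have yp: "0 < y" using b(1) by (rule less_le_trans[rotated]) simp
          have "ln y \<le> ln (real (Suc n))" using b(2) yp unfolding mx by simp
          moreover have "ln (1 / real (Suc n)) \<le> ln y" using b(1) yp by (subst ln_le_cancel_iff) auto
          moreover have "ln (1 / real (Suc n)) = - ln (real (Suc n))" by (simp add: ln_div)
          ultimately show "norm (ln y) \<le> ln (real (Suc n))" by auto
        qed
      qed (use cm[OF sq] in measurable)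
    qed
    have ilh: "integrable q (\<lambda>L. ln (h n L))" unfolding lnh using ic by auto
    have Elnh: "(\<integral>L. ln (h n L) \<partial>q) = (\<Sum>p\<in>UNIV. \<Sum>k\<in>UNIV. a n p k)"
    proof -
      have "(\<integral>L. ln (clip (Suc n) (fpk p k (L p k))) \<partial>q) = a n p k" for p k
        unfolding a_def marg_def
        by (subst integral_distr) (auto intro: Lm[OF sq] simp: clip_def intro!: measurable_compose[OF fm])
      then show ?thesis unfolding lnh using ic by (simp add: integral_sum integrable_sum)
    qed
    show ?thesis
      using K.gibbs[OF hm hpos hint _ ilh] unfolding Elnh by simp
  qed
  have KLnn: "0 \<le> KL (marg q p k) (g k)" for p k
    using mk[of p k] unfolding klsetup_def by (intro KL_nonneg) auto
  have L1: "(\<lambda>n. ereal (\<Sum>p\<in>UNIV. \<Sum>k\<in>UNIV. a n p k)) \<longlonglongrightarrow> (\<Sum>p\<in>UNIV. \<Sum>k\<in>UNIV. KL (marg q p k) (g k))"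
  proof -
    have "(\<lambda>n. \<Sum>p\<in>UNIV. \<Sum>k\<in>UNIV. ereal (a n p k)) \<longlonglongrightarrow> (\<Sum>p\<in>UNIV. \<Sum>k\<in>UNIV. KL (marg q p k) (g k))"
    proof (rule ereal_sum_lim)
      fix p
      show "(\<lambda>n. \<Sum>k\<in>UNIV. ereal (a n p k)) \<longlonglongrightarrow> (\<Sum>k\<in>UNIV. KL (marg q p k) (g k))"
        by (rule ereal_sum_lim) (use lim KLnn in \<open>auto simp: less_eq_ereal_def\<close>)
      show "(\<Sum>k\<in>UNIV. KL (marg q p k) (g k)) \<noteq> -\<infinity>"
        by (rule ereal_sum_nMinf) (use KLnn in \<open>auto simp: less_eq_ereal_def\<close>)
    qed simp
    then show ?thesis by simp
  qed
  have L2: "(\<lambda>n. KL q ?G + ereal ((1 + 1 / real (Suc n)) ^ (CARD('p) * CARD('k)) - 1)) \<longlonglongrightarrow> KL q ?G + ereal 0"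
  proof (rule tendsto_add_ereal_general)
    have "(\<lambda>n. 1 / real (Suc n)) \<longlonglongrightarrow> 0" using LIMSEQ_inverse_real_of_nat by (simp add: inverse_eq_divide)
    then have "(\<lambda>n. (1 + 1 / real (Suc n)) ^ (CARD('p) * CARD('k)) - 1) \<longlonglongrightarrow> (1 + 0) ^ (CARD('p) * CARD('k)) - 1"
      by (intro tendsto_intros)
    then show "(\<lambda>n. ereal ((1 + 1 / real (Suc n)) ^ (CARD('p) * CARD('k)) - 1)) \<longlonglongrightarrow> ereal 0"
      by (simp add: tendsto_ereal)
    have "0 \<le> KL q ?G" using K.KL_nonneg_ac .
    then show "\<not> (KL q ?G = \<infinity> \<and> ereal 0 = - \<infinity> \<or> KL q ?G = - \<infinity> \<and> ereal 0 = \<infinity>)" by auto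
  qed simp
  show ?thesis
    using LIMSEQ_le[OF L1 L2] bound by simp
qed




lemma enn2real_prod: "enn2real (prod f A) = (\<Prod>i\<in>A. enn2real (f i))"
  by (induction A rule: infinite_finite_induct) (auto simp: enn2real_mult)

lemma prod_construct:
  fixes Q :: "'p::finite \<Rightarrow> 'k::finite \<Rightarrow> real measure" and g :: "'k \<Rightarrow> real measure"
  assumes gp: "\<And>k. prob_space (g k)" and gb: "\<And>k. sets (g k) = sets borel"
    and Qp: "\<And>p k. prob_space (Q p k)" and Qb: "\<And>p k. sets (Q p k) = sets borel"
    and Qac: "\<And>p k. absolutely_continuous (g k) (Q p k)"
    and Qfin: "\<And>p k. KL (Q p k) (g k) \<noteq> \<infinity>"
  defines "q' \<equiv> PiM UNIV (\<lambda>p. PiM UNIV (\<lambda>k. Q p k))"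
  shows "prob_space q'" "sets q' = sets Lspace" "\<And>p k. marg q' p k = Q p k"
    "KL q' (prior g) = (\<Sum>p\<in>UNIV. \<Sum>k\<in>UNIV. KL (Q p k) (g k))"
proof -
  have pps: "prob_space (PiM UNIV (\<lambda>k. Q p k))" for p by (rule prob_space_PiM) (rule Qp)
  show pq: "prob_space q'" unfolding q'_def by (rule prob_space_PiM) (rule pps)
  show sq: "sets q' = sets Lspace" unfolding q'_def Lspace_def
    by (intro sets_PiM_cong refl) (auto intro!: sets_PiM_cong Qb)
  have mk: "klsetup (Q p k) (g k)" for p k
    unfolding klsetup_def using Qp gp Qb gb Qac by simp
  have dm: "distr q' (Q p k) (\<lambda>L. L p k) = Q p k" for p k
    unfolding q'_def by (rule nested_marg) (rule Qp)
  show mg: "marg q' p k = Q p k" for p k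
  proof -
    have "marg q' p k = distr q' (Q p k) (\<lambda>L. L p k)"
      unfolding marg_def by (rule distr_cong) (auto simp: Qb)
    then show ?thesis using dm by simp
  qed
  let ?G = "prior g :: ('p \<Rightarrow> 'k \<Rightarrow> real) measure"
  have sG: "sets ?G = sets Lspace" by (rule sets_prior) (rule gb)
  have pG: "prob_space ?G" by (rule prob_prior) (rule gp)
  define r where "r p k = RN_deriv (g k) (Q p k)" for p k
  have rm: "r p k \<in> borel_measurable (g k)" for p k unfolding r_def by simp
  have Qd: "Q p k = density (g k) (r p k)" for p k
    unfolding r_def using klsetup.q_dens[OF mk] by simp
  define R where "R p l = (\<Prod>k\<in>UNIV. r p k (l k))" for p and l :: "'k \<Rightarrow> real"
  have inner: "PiM UNIV (\<lambda>k. Q p k) = density (PiM UNIV g) (R p)" for p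
  proof -
    have "PiM UNIV (\<lambda>k. Q p k) = PiM UNIV (\<lambda>k. density (g k) (r p k))" by (simp add: Qd[symmetric])
    also have "\<dots> = density (PiM UNIV g) (\<lambda>x. \<Prod>k\<in>UNIV. r p k (x k))"
    proof (rule PiM_density)
      show "sigma_finite_measure (g k)" for k using gp prob_space_imp_sigma_finite by blast
      show "r p k \<in> borel_measurable (g k)" for k by (rule rm)
      show "sigma_finite_measure (density (g k) (r p k))" for k
        using Qp[of p k] Qd[of p k] prob_space_imp_sigma_finite by metis
    qed
    finally show ?thesis unfolding R_def .
  qed
  have Rm: "R p \<in> borel_measurable (PiM UNIV g)" for p
  proof -
    have "(\<lambda>l. l k) \<in> measurable (PiM UNIV g) (g k)" for k by (rule measurable_component_singleton) simp
    then have "(\<lambda>l. r p k (l k)) \<in> borel_measurable (PiM UNIV g)" for k using rm measurable_compose by blast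
    then show ?thesis unfolding R_def by (intro borel_measurable_prod_ennreal) auto
  qed
  define RR where "RR L = (\<Prod>p\<in>UNIV. R p (L p))" for L :: "'p \<Rightarrow> 'k \<Rightarrow> real"
  have qd: "q' = density ?G RR"
  proof -
    have "q' = PiM UNIV (\<lambda>p. density (PiM UNIV g) (R p))" unfolding q'_def by (simp add: inner)
    also have "\<dots> = density (PiM UNIV (\<lambda>p. PiM UNIV g)) (\<lambda>x. \<Prod>p\<in>UNIV. R p (x p))"
    proof (rule PiM_density)
      show "sigma_finite_measure (PiM UNIV g)" for p::'p
        using prob_space_PiM[of UNIV g] gp prob_space_imp_sigma_finite by blast
      show "R p \<in> borel_measurable (PiM UNIV g)" for p by (rule Rm)
      show "sigma_finite_measure (density (PiM UNIV g) (R p))" for p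
        using pps[of p] inner[of p] prob_space_imp_sigma_finite by metis
    qed
    finally show ?thesis unfolding RR_def prior_def .
  qed
  have RRm: "RR \<in> borel_measurable ?G"
  proof -
    have "(\<lambda>L. L p) \<in> measurable ?G (PiM UNIV g)" for p
      unfolding prior_def by (rule measurable_component_singleton) simp
    then have "(\<lambda>L. R p (L p)) \<in> borel_measurable ?G" for p using Rm measurable_compose by blast
    then show ?thesis unfolding RR_def by (intro borel_measurable_prod_ennreal) auto
  qed
  have ac: "absolutely_continuous ?G q'" unfolding qd by (rule absolutely_continuousI_density[OF RRm])
  have sqG: "sets q' = sets ?G" using sq sG by simp
  interpret K: klsetup q' ?G unfolding klsetup_def using pq pG sqG ac by simp
  have AE1: "AE L in ?G. RR L = RN_deriv ?G q' L"
  proof -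
    interpret sigma_finite_measure ?G using pG prob_space_imp_sigma_finite by blast
    show ?thesis by (rule RN_deriv_unique[OF RRm qd[symmetric]])
  qed
  have AE2: "AE L in q'. RR L = RN_deriv ?G q' L"
    by (rule absolutely_continuous_AE[OF sqG ac AE1])
  define fpk where "fpk p k x = enn2real (r p k x)" for p k x
  have fpk_f: "fpk p k = klsetup.f (Q p k) (g k)" for p k
    unfolding fpk_def r_def by (simp add: klsetup.f_def[OF mk] fun_eq_iff)
  have Lm: "(\<lambda>L. L p k) \<in> measurable q' (Q p k)" for p k
    unfolding q'_def
  proof -
    have 1: "(\<lambda>L. L p) \<in> measurable (PiM UNIV (\<lambda>p. PiM UNIV (\<lambda>k. Q p k))) (PiM UNIV (\<lambda>k. Q p k))"
      by (rule measurable_component_singleton) simp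
    have 2: "(\<lambda>l. l k) \<in> measurable (PiM UNIV (\<lambda>k. Q p k)) (Q p k)"
      by (rule measurable_component_singleton) simp
    show "(\<lambda>L. L p k) \<in> measurable (PiM UNIV (\<lambda>p. PiM UNIV (\<lambda>k. Q p k))) (Q p k)"
      using measurable_compose[OF 1 2] by simp
  qed
  have fQm: "fpk p k \<in> borel_measurable (Q p k)" for p k
    unfolding fpk_f using klsetup.meas_q[OF mk] .
  have lnfm: "(\<lambda>x. ln (fpk p k x)) \<in> borel_measurable (Q p k)" for p k
    using fQm[of p k] by measurable
  have AE3: "AE L in q'. 0 < fpk p k (L p k)" for p k
  proof (rule AE_distrD[OF Lm])
    show "AE x in distr q' (Q p k) (\<lambda>L. L p k). 0 < fpk p k x"
      unfolding dm fpk_f by (rule klsetup.AE_q[OF mk])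
  qed
  have AE4: "AE L in q'. \<forall>p\<in>UNIV. \<forall>k\<in>UNIV. 0 < fpk p k (L p k)"
    by (intro AE_finite_allI) (auto intro: AE3)
  have AE5: "AE L in q'. ln (K.f L) = (\<Sum>p\<in>UNIV. \<Sum>k\<in>UNIV. ln (fpk p k (L p k)))"
    using AE2 AE4
  proof eventually_elim
    case (elim L)
    have "K.f L = enn2real (RR L)" unfolding K.f_def using elim(1) by simp
    also have "\<dots> = (\<Prod>p\<in>UNIV. \<Prod>k\<in>UNIV. fpk p k (L p k))"
      unfolding RR_def R_def fpk_def by (simp add: enn2real_prod)
    finally show ?case using elim(2) by (simp add: ln_prod prod_pos less_imp_neq[symmetric])
  qed
  have iQ: "integrable (Q p k) (\<lambda>x. ln (fpk p k x))" and KQ: "KL (Q p k) (g k) = ereal (\<integral>x. ln (fpk p k x) \<partial>Q p k)" for p k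
    using Qfin[of p k] unfolding klsetup.KL_eq[OF mk] fpk_f by (auto split: if_splits)
  have iq: "integrable q' (\<lambda>L. ln (fpk p k (L p k)))" for p k
    using iQ[of p k] by (subst (asm) dm[symmetric], subst (asm) integrable_distr_eq[OF Lm]) (auto intro: lnfm)
  have Eq: "(\<integral>L. ln (fpk p k (L p k)) \<partial>q') = (\<integral>x. ln (fpk p k x) \<partial>Q p k)" for p k
    by (subst dm[symmetric], subst integral_distr[OF Lm]) (auto intro: lnfm)
  have isum: "integrable q' (\<lambda>L. \<Sum>p\<in>UNIV. \<Sum>k\<in>UNIV. ln (fpk p k (L p k)))" using iq by auto
  have iKf: "integrable q' (\<lambda>L. ln (K.f L))"
    using isum by (subst integrable_cong_AE[OF _ _ AE5]) auto
  have "(\<integral>L. ln (K.f L) \<partial>q') = (\<integral>L. (\<Sum>p\<in>UNIV. \<Sum>k\<in>UNIV. ln (fpk p k (L p k))) \<partial>q')"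
    by (rule integral_cong_AE[OF _ _ AE5]) (use isum in auto)
  also have "\<dots> = (\<Sum>p\<in>UNIV. \<Sum>k\<in>UNIV. \<integral>x. ln (fpk p k x) \<partial>Q p k)"
    using iq by (simp add: integral_sum integrable_sum Eq)
  finally show "KL q' ?G = (\<Sum>p\<in>UNIV. \<Sum>k\<in>UNIV. KL (Q p k) (g k))"
    unfolding K.KL_eq using iKf by (simp add: KQ)
qed




definition var1 :: "real measure \<Rightarrow> real" where
  "var1 q = (\<integral>l. (l - (\<integral>l'. l' \<partial>q))\<^sup>2 \<partial>q)"

lemma marg_integral:
  fixes q :: "('p::finite \<Rightarrow> 'k::finite \<Rightarrow> real) measure"
    and h :: "real \<Rightarrow> real"
  assumes sq: "sets q = sets Lspace" and h: "h \<in> borel_measurable borel"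
  shows "integrable (marg q p k) h \<longleftrightarrow> integrable q (\<lambda>L. h (L p k))"
    "integral\<^sup>L (marg q p k) h = (\<integral>L. h (L p k) \<partial>q)"
  unfolding marg_def
  using integrable_distr_eq[OF meas_comp_q[OF sq] h] integral_distr[OF meas_comp_q[OF sq] h] by auto

lemma adm_marg:
  fixes q :: "('p::finite \<Rightarrow> 'k::finite \<Rightarrow> real) measure"
  assumes q: "admissible_L Lbar q"
  shows "admissible_1 (Lbar p k) (marg q p k)"
    "var1 (marg q p k) = (\<integral>L. (L p k - Lbar p k)\<^sup>2 \<partial>q)"
proof -
  have sq: "sets q = sets Lspace" and pq: "prob_space q" using q unfolding admissible_L_def by auto
  interpret prob_space q by (rule pq)
  have m: "(\<integral>l. l \<partial>marg q p k) = Lbar p k"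
    using marg_integral(2)[OF sq, of "\<lambda>x. x"] q unfolding admissible_L_def by simp
  show "admissible_1 (Lbar p k) (marg q p k)"
    unfolding admissible_1_def
  proof (intro conjI)
    show "prob_space (marg q p k)" unfolding marg_def by (rule prob_space_distr) (rule meas_comp_q[OF sq])
    show "sets (marg q p k) = sets borel" by (simp add: marg_def)
    show "integrable (marg q p k) (\<lambda>l. l\<^sup>2)"
      using marg_integral(1)[OF sq, of "\<lambda>x. x\<^sup>2"] q unfolding admissible_L_def by simp
  qed (rule m)
  show "var1 (marg q p k) = (\<integral>L. (L p k - Lbar p k)\<^sup>2 \<partial>q)"
    unfolding var1_def m by (rule marg_integral(2)[OF sq]) simp
qed

lemma prod_adm:
  fixes q :: "('p::finite \<Rightarrow> 'k::finite \<Rightarrow> real) measure"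
  assumes sq: "sets q = sets Lspace" and pq: "prob_space q" and mg: "\<And>p k. marg q p k = Q p k"
    and Qa: "\<And>p k. admissible_1 (Lbar p k) (Q p k)"
  shows "admissible_L Lbar q" "\<And>p k. (\<integral>L. (L p k - Lbar p k)\<^sup>2 \<partial>q) = var1 (Q p k)"
proof -
  show "admissible_L Lbar q"
    unfolding admissible_L_def
  proof (intro conjI allI pq sq)
    fix p k
    show "integrable q (\<lambda>L. (L p k)\<^sup>2)"
      using marg_integral(1)[OF sq, of "\<lambda>x. x\<^sup>2" p k] Qa[of p k] mg[of p k] unfolding admissible_1_def by simp
    show "(\<integral>L. L p k \<partial>q) = Lbar p k"
      using marg_integral(2)[OF sq, of "\<lambda>x. x" p k] Qa[of p k] mg[of p k] unfolding admissible_1_def by simp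
  qed
  fix p k
  have m: "(\<integral>l. l \<partial>Q p k) = Lbar p k" using Qa[of p k] unfolding admissible_1_def by simp
  show "(\<integral>L. (L p k - Lbar p k)\<^sup>2 \<partial>q) = var1 (Q p k)"
    unfolding var1_def m using marg_integral(2)[OF sq, of "\<lambda>x. (x - Lbar p k)\<^sup>2" p k] mg[of p k] by simp
qed

lemma var1_nonneg: "0 \<le> var1 q" unfolding var1_def by simp

lemma adm1_KL_nonneg:
  assumes "admissible_1 l q" "prob_space g" "sets g = sets borel"
  shows "0 \<le> KL q g"
  using assms unfolding admissible_1_def by (intro KL_nonneg) auto




lemma ereal_sum_PInf:
  fixes f :: "'i \<Rightarrow> ereal"
  assumes "finite S" "i \<in> S" "f i = \<infinity>" "\<And>j. j \<in> S \<Longrightarrow> f j \<noteq> -\<infinity>"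
  shows "sum f S = \<infinity>"
proof -
  have "sum f S = f i + sum f (S - {i})" using assms by (simp add: sum.remove)
  moreover have "sum f (S - {i}) \<noteq> -\<infinity>" using assms by (intro ereal_sum_nMinf) auto
  ultimately show ?thesis using assms by simp
qed

lemma ereal_nonneg_sum_fin:
  fixes f :: "'i \<Rightarrow> ereal"
  assumes "finite S" "\<And>j. j \<in> S \<Longrightarrow> 0 \<le> f j" "sum f S \<noteq> \<infinity>" "i \<in> S"
  shows "f i \<noteq> \<infinity>"
proof
  assume "f i = \<infinity>"
  then have "sum f S = \<infinity>" using assms by (intro ereal_sum_PInf[of S i]) (auto dest!: assms(2) simp: less_eq_ereal_def split: ereal.splits)
  then show False using assms by simp
qed




theorem proposition2:
  fixes X :: "'n::finite \<Rightarrow> 'p::finite \<Rightarrow> real"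
    and Z :: "'n \<Rightarrow> 'k::finite \<Rightarrow> real"
    and g :: "'k \<Rightarrow> real measure"
    and \<tau> :: real
    and Lbar :: "'p \<Rightarrow> 'k \<Rightarrow> real"
  assumes tau_pos: "\<tau> > 0"
    and Z_orth: "orthonormal_cols Z"
    and g_prob: "\<And>k. prob_space (g k)"
    and g_borel: "\<And>k. sets (g k) = sets borel"
  shows "Ftilde X g Z \<tau> Lbar =
    ereal (- \<tau>) * (ereal (1/2 * frob_sq X Z Lbar) +
      (\<Sum>k\<in>UNIV. \<Sum>p\<in>UNIV. Ppen CARD('n) CARD('k) \<tau> (g k) (Lbar p k)))"
proof -
  let ?G = "prior g :: ('p \<Rightarrow> 'k \<Rightarrow> real) measure"
  define C0 where "C0 = - (real CARD('n) * real CARD('p) / 2) * ln (2 * pi / \<tau>)"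
  define c1 where "c1 = real CARD('n) / (2 * real CARD('k) * \<tau>) * ln (2 * pi / \<tau>)"
  define fr where "fr = frob_sq X Z Lbar"
  define Ip where "Ip p k = (INF q \<in> {q. admissible_1 (Lbar p k) q}.
        ereal (\<integral>l. (l - (\<integral>l'. l' \<partial>q))\<^sup>2 \<partial>q) + ereal (2 / \<tau>) * KL q (g k))" for p k
  have Pp: "Ppen CARD('n) CARD('k) \<tau> (g k) (Lbar p k) = ereal c1 + ereal (1/2) * Ip p k" for p k
    unfolding Ppen_def c1_def Ip_def by simp
  have Ip_le: "Ip p k \<le> ereal (var1 q) + ereal (2 / \<tau>) * KL q (g k)" if "admissible_1 (Lbar p k) q" for p k q
    unfolding Ip_def var1_def by (rule INF_lower) (use that in simp)
  have Ip_nn: "0 \<le> Ip p k" for p k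
    unfolding Ip_def
  proof (rule INF_greatest)
    fix q assume "q \<in> {q. admissible_1 (Lbar p k) q}"
    then have "0 \<le> KL q (g k)" by (intro adm1_KL_nonneg[OF _ g_prob g_borel]) auto
    then have "0 \<le> ereal (2 / \<tau>) * KL q (g k)" using tau_pos by (intro ereal_0_le_mult) auto
    moreover have "0 \<le> ereal (\<integral>l. (l - (\<integral>l'. l' \<partial>q))\<^sup>2 \<partial>q)" by simp
    ultimately show "0 \<le> ereal (\<integral>l. (l - (\<integral>l'. l' \<partial>q))\<^sup>2 \<partial>q) + ereal (2 / \<tau>) * KL q (g k)" by simp
  qed
  have Fq: "Fobj X g Z \<tau> q = ereal (C0 - \<tau> / 2 * (fr + (\<Sum>p\<in>UNIV. \<Sum>k\<in>UNIV. var1 (marg q p k)))) - KL q ?G"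
    if q: "admissible_L Lbar q" for q
    unfolding Fobj_def Eloglik[OF tau_pos Z_orth q] adm_marg(2)[OF q] C0_def fr_def ..
  have cK: "\<tau> * (real CARD('p) * real CARD('k) * c1) = - C0"
    unfolding c1_def C0_def using tau_pos by (simp add: field_simps)
  have Pnn: "Ppen CARD('n) CARD('k) \<tau> (g k) (Lbar p k) \<noteq> -\<infinity>" for p k
    unfolding Pp using Ip_nn[of p k] by (cases "Ip p k") auto
  have KLm_nn: "0 \<le> KL (marg q p k) (g k)" if "admissible_L Lbar q" for q p k
    by (rule adm1_KL_nonneg[OF adm_marg(1)[OF that] g_prob g_borel])
  show ?thesis
  proof (cases "\<exists>p k. Ip p k = \<infinity>")
    case True
    then obtain p0 k0 where pk0: "Ip p0 k0 = \<infinity>" by blast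
    have s0: "(\<Sum>p\<in>UNIV. Ppen CARD('n) CARD('k) \<tau> (g k0) (Lbar p k0)) = \<infinity>"
      by (rule ereal_sum_PInf[of _ p0]) (use Pnn in \<open>auto simp: Pp pk0\<close>)
    have "(\<Sum>k\<in>UNIV. \<Sum>p\<in>UNIV. Ppen CARD('n) CARD('k) \<tau> (g k) (Lbar p k)) = \<infinity>"
    proof (rule ereal_sum_PInf[of _ k0])
      fix k show "(\<Sum>p\<in>UNIV. Ppen CARD('n) CARD('k) \<tau> (g k) (Lbar p k)) \<noteq> -\<infinity>"
        by (rule ereal_sum_nMinf) (use Pnn in auto)
    qed (use s0 in auto)
    then have R: "ereal (- \<tau>) * (ereal (1/2 * frob_sq X Z Lbar) +
      (\<Sum>k\<in>UNIV. \<Sum>p\<in>UNIV. Ppen CARD('n) CARD('k) \<tau> (g k) (Lbar p k))) = -\<infinity>"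
      using tau_pos by simp
    have "Fobj X g Z \<tau> q = -\<infinity>" if q: "admissible_L Lbar q" for q
    proof -
      have "KL (marg q p0 k0) (g k0) = \<infinity>"
      proof (rule ccontr)
        assume "KL (marg q p0 k0) (g k0) \<noteq> \<infinity>"
        then obtain \<kappa> where "KL (marg q p0 k0) (g k0) = ereal \<kappa>"
          using KLm_nn[OF q, of p0 k0] by (cases "KL (marg q p0 k0) (g k0)") auto
        then show False using Ip_le[OF adm_marg(1)[OF q, of p0 k0]] pk0 by simp
      qed
      then have "(\<Sum>p\<in>UNIV. KL (marg q p k0) (g k0)) = \<infinity>"
        by (intro ereal_sum_PInf[of _ p0]) (use KLm_nn[OF q] in \<open>auto simp: less_eq_ereal_def split: ereal.splits\<close>)
      then have "(\<Sum>k\<in>UNIV. \<Sum>p\<in>UNIV. KL (marg q p k) (g k)) = \<infinity>"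
        by (intro ereal_sum_PInf[of _ k0] ereal_sum_nMinf) (use KLm_nn[OF q] in \<open>auto simp: less_eq_ereal_def split: ereal.splits\<close>)
      then have "(\<Sum>p\<in>UNIV. \<Sum>k\<in>UNIV. KL (marg q p k) (g k)) = \<infinity>"
        by (subst sum.swap) simp
      moreover have "(\<Sum>p\<in>UNIV. \<Sum>k\<in>UNIV. KL (marg q p k) (g k)) \<le> KL q ?G"
        using q unfolding admissible_L_def by (intro data_ineq g_prob g_borel) auto
      ultimately have "KL q ?G = \<infinity>" by simp
      then show ?thesis unfolding Fq[OF q] by simp
    qed
    then have "Ftilde X g Z \<tau> Lbar = -\<infinity>"
      unfolding Ftilde_def by (intro antisym SUP_least) auto
    then show ?thesis using R by metis
  next
    case False
    define ip where "ip p k = real_of_ereal (Ip p k)" for p k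
    have Ipe: "Ip p k = ereal (ip p k)" for p k
      using False Ip_nn[of p k] unfolding ip_def by (cases "Ip p k") auto
    define V where "V = C0 - \<tau> / 2 * fr - \<tau> / 2 * (\<Sum>p\<in>UNIV. \<Sum>k\<in>UNIV. ip p k)"
    have R: "ereal (- \<tau>) * (ereal (1/2 * frob_sq X Z Lbar) +
      (\<Sum>k\<in>UNIV. \<Sum>p\<in>UNIV. Ppen CARD('n) CARD('k) \<tau> (g k) (Lbar p k))) = ereal V"
    proof -
      have "(\<Sum>k\<in>UNIV. \<Sum>p\<in>UNIV. Ppen CARD('n) CARD('k) \<tau> (g k) (Lbar p k))
          = ereal (\<Sum>k\<in>UNIV. \<Sum>p\<in>UNIV. c1 + 1/2 * ip p k)"
        unfolding Pp Ipe by simp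
      also have "(\<Sum>k\<in>UNIV. \<Sum>p\<in>UNIV. c1 + 1/2 * ip p k) = real CARD('p) * real CARD('k) * c1 + 1/2 * (\<Sum>p\<in>UNIV. \<Sum>k\<in>UNIV. ip p k)"
        by (simp add: sum.distrib sum_distrib_left sum.swap[of _ "UNIV::'k set"])
      finally have "(\<Sum>k\<in>UNIV. \<Sum>p\<in>UNIV. Ppen CARD('n) CARD('k) \<tau> (g k) (Lbar p k))
          = ereal (real CARD('p) * real CARD('k) * c1 + 1/2 * (\<Sum>p\<in>UNIV. \<Sum>k\<in>UNIV. ip p k))" .
      then show ?thesis unfolding V_def fr_def using cK by (simp add: algebra_simps)
    qed
    have up: "Fobj X g Z \<tau> q \<le> ereal V" if q: "admissible_L Lbar q" for q
    proof (cases "KL q ?G = \<infinity>")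
      case True then show ?thesis unfolding Fq[OF q] by simp
    next
      case KLfin: False
      have pq: "prob_space q" and sq: "sets q = sets Lspace" using q unfolding admissible_L_def by auto
      have sG: "sets ?G = sets Lspace" by (rule sets_prior) (rule g_borel)
      have pG: "prob_space ?G" by (rule prob_prior) (rule g_prob)
      have KLGnn: "0 \<le> KL q ?G" using pq sq sG pG by (intro KL_nonneg) auto
      obtain \<kappa> where \<kappa>: "KL q ?G = ereal \<kappa>" using KLfin KLGnn by (cases "KL q ?G") auto
      have D: "(\<Sum>p\<in>UNIV. \<Sum>k\<in>UNIV. KL (marg q p k) (g k)) \<le> ereal \<kappa>"
        unfolding \<kappa>[symmetric] using pq sq by (intro data_ineq g_prob g_borel)
      have finpk: "KL (marg q p k) (g k) \<noteq> \<infinity>" for p k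
      proof -
        have s1: "(\<Sum>p\<in>UNIV. \<Sum>k\<in>UNIV. KL (marg q p k) (g k)) \<noteq> \<infinity>" using D by auto
        have "(\<Sum>k\<in>UNIV. KL (marg q p k) (g k)) \<noteq> \<infinity>"
          by (rule ereal_nonneg_sum_fin[OF _ _ s1]) (auto intro!: sum_nonneg KLm_nn[OF q])
        then show ?thesis by (rule ereal_nonneg_sum_fin[rotated 2]) (auto intro!: KLm_nn[OF q])
      qed
      define kp where "kp p k = real_of_ereal (KL (marg q p k) (g k))" for p k
      have kpe: "KL (marg q p k) (g k) = ereal (kp p k)" for p k
        using finpk[of p k] KLm_nn[OF q, of p k] unfolding kp_def by (cases "KL (marg q p k) (g k)") auto
      have sk: "(\<Sum>p\<in>UNIV. \<Sum>k\<in>UNIV. kp p k) \<le> \<kappa>" using D unfolding kpe by simp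
      have ipb: "ip p k \<le> var1 (marg q p k) + 2 / \<tau> * kp p k" for p k
        using Ip_le[OF adm_marg(1)[OF q, of p k]] unfolding Ipe kpe by simp
      have "\<tau> / 2 * (\<Sum>p\<in>UNIV. \<Sum>k\<in>UNIV. ip p k) \<le> \<tau> / 2 * (\<Sum>p\<in>UNIV. \<Sum>k\<in>UNIV. var1 (marg q p k) + 2 / \<tau> * kp p k)"
        using tau_pos by (intro mult_left_mono sum_mono ipb) auto
      also have "\<dots> = \<tau> / 2 * (\<Sum>p\<in>UNIV. \<Sum>k\<in>UNIV. var1 (marg q p k)) + (\<Sum>p\<in>UNIV. \<Sum>k\<in>UNIV. kp p k)"
        using tau_pos by (simp add: sum.distrib sum_distrib_left algebra_simps)
      finally show ?thesis unfolding Fq[OF q] \<kappa> V_def using sk by (simp add: algebra_simps)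
    qed
    have lo: "ereal V \<le> Ftilde X g Z \<tau> Lbar"
    proof (rule ereal_le_epsilon2)
      fix e :: real assume e: "0 < e"
      define d where "d = 2 * e / (\<tau> * (real CARD('p) * real CARD('k)))"
      have d: "0 < d" unfolding d_def using e tau_pos by simp
      have ex: "\<exists>Q. admissible_1 (Lbar p k) Q \<and> ereal (var1 Q) + ereal (2 / \<tau>) * KL Q (g k) < ereal (ip p k + d)" for p k
      proof -
        have "Ip p k < ereal (ip p k + d)" unfolding Ipe using d by simp
        then show ?thesis unfolding Ip_def INF_less_iff var1_def by auto
      qed
      have "\<forall>pk. \<exists>Q. admissible_1 (Lbar (fst pk) (snd pk)) Q \<and>
          ereal (var1 Q) + ereal (2 / \<tau>) * KL Q (g (snd pk)) < ereal (ip (fst pk) (snd pk) + d)"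
        using ex by blast
      then have "\<exists>QQ. \<forall>pk. admissible_1 (Lbar (fst pk) (snd pk)) (QQ pk) \<and>
          ereal (var1 (QQ pk)) + ereal (2 / \<tau>) * KL (QQ pk) (g (snd pk)) < ereal (ip (fst pk) (snd pk) + d)"
        by (rule choice)
      then obtain QQ where QQ: "\<And>pk. admissible_1 (Lbar (fst pk) (snd pk)) (QQ pk) \<and>
          ereal (var1 (QQ pk)) + ereal (2 / \<tau>) * KL (QQ pk) (g (snd pk)) < ereal (ip (fst pk) (snd pk) + d)"
        by blast
      define Q where "Q p k = QQ (p, k)" for p k
      have Qa: "admissible_1 (Lbar p k) (Q p k)" for p k using QQ[of "(p,k)"] unfolding Q_def by simp
      have Qlt: "ereal (var1 (Q p k)) + ereal (2 / \<tau>) * KL (Q p k) (g k) < ereal (ip p k + d)" for p k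
        using QQ[of "(p,k)"] unfolding Q_def by simp
      have KQnn: "0 \<le> KL (Q p k) (g k)" for p k by (rule adm1_KL_nonneg[OF Qa g_prob g_borel])
      have KQfin: "KL (Q p k) (g k) \<noteq> \<infinity>" for p k
        using Qlt[of p k] tau_pos by auto
      define kq where "kq p k = real_of_ereal (KL (Q p k) (g k))" for p k
      have kqe: "KL (Q p k) (g k) = ereal (kq p k)" for p k
        using KQfin[of p k] KQnn[of p k] unfolding kq_def by (cases "KL (Q p k) (g k)") auto
      have kqb: "var1 (Q p k) + 2 / \<tau> * kq p k < ip p k + d" for p k
        using Qlt[of p k] unfolding kqe by simp
      have Qac: "absolutely_continuous (g k) (Q p k)" for p k
        using KQfin[of p k] unfolding KL_def by (auto split: if_splits)
      have Qp: "prob_space (Q p k)" and Qb: "sets (Q p k) = sets borel" for p k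
        using Qa[of p k] unfolding admissible_1_def by auto
      define q' where "q' = PiM UNIV (\<lambda>p. PiM UNIV (\<lambda>k. Q p k))"
      have pc1: "prob_space q'" unfolding q'_def by (rule prod_construct(1)[OF g_prob g_borel Qp Qb Qac KQfin])
      have pc2: "sets q' = sets Lspace" unfolding q'_def by (rule prod_construct(2)[OF g_prob g_borel Qp Qb Qac KQfin])
      have pc3: "marg q' p k = Q p k" for p k unfolding q'_def by (rule prod_construct(3)[OF g_prob g_borel Qp Qb Qac KQfin])
      have pc4: "KL q' ?G = (\<Sum>p\<in>UNIV. \<Sum>k\<in>UNIV. KL (Q p k) (g k))" unfolding q'_def by (rule prod_construct(4)[OF g_prob g_borel Qp Qb Qac KQfin])
      have q'a: "admissible_L Lbar q'" by (rule prod_adm(1)[OF pc2 pc1 pc3 Qa])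
      have q'v: "var1 (marg q' p k) = var1 (Q p k)" for p k using pc3 by simp
      have "Fobj X g Z \<tau> q' = ereal (C0 - \<tau> / 2 * (fr + (\<Sum>p\<in>UNIV. \<Sum>k\<in>UNIV. var1 (Q p k))) - (\<Sum>p\<in>UNIV. \<Sum>k\<in>UNIV. kq p k))"
        unfolding Fq[OF q'a] pc4 q'v kqe by simp
      moreover have "V - e \<le> C0 - \<tau> / 2 * (fr + (\<Sum>p\<in>UNIV. \<Sum>k\<in>UNIV. var1 (Q p k))) - (\<Sum>p\<in>UNIV. \<Sum>k\<in>UNIV. kq p k)"
      proof -
        have "\<tau> / 2 * (\<Sum>p\<in>UNIV. \<Sum>k\<in>UNIV. var1 (Q p k) + 2 / \<tau> * kq p k) \<le> \<tau> / 2 * (\<Sum>p\<in>UNIV. \<Sum>k\<in>UNIV. ip p k + d)"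
          using tau_pos by (intro mult_left_mono sum_mono less_imp_le[OF kqb]) auto
        also have "\<dots> = \<tau> / 2 * (\<Sum>p\<in>UNIV. \<Sum>k\<in>UNIV. ip p k) + e"
        proof -
          have "(\<Sum>p\<in>UNIV. \<Sum>k\<in>UNIV. ip p k + d) = (\<Sum>p\<in>UNIV. \<Sum>k\<in>UNIV. ip p k) + real CARD('p) * real CARD('k) * d"
            by (simp add: sum.distrib)
          moreover have "\<tau> / 2 * (real CARD('p) * real CARD('k) * d) = e"
            unfolding d_def using tau_pos by (simp add: field_simps)
          ultimately show ?thesis by (simp add: algebra_simps)
        qed
        also have "\<tau> / 2 * (\<Sum>p\<in>UNIV. \<Sum>k\<in>UNIV. var1 (Q p k) + 2 / \<tau> * kq p k)
            = \<tau> / 2 * (\<Sum>p\<in>UNIV. \<Sum>k\<in>UNIV. var1 (Q p k)) + (\<Sum>p\<in>UNIV. \<Sum>k\<in>UNIV. kq p k)"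
          using tau_pos by (simp add: sum.distrib sum_distrib_left algebra_simps)
        finally show ?thesis unfolding V_def by (simp add: algebra_simps)
      qed
      ultimately have "ereal (V - e) \<le> Fobj X g Z \<tau> q'" by simp
      also have "\<dots> \<le> Ftilde X g Z \<tau> Lbar" unfolding Ftilde_def by (rule SUP_upper) (simp add: q'a)
      finally show "ereal V \<le> Ftilde X g Z \<tau> Lbar + ereal e"
        by (cases "Ftilde X g Z \<tau> Lbar") auto
    qed
    have "Ftilde X g Z \<tau> Lbar \<le> ereal V" unfolding Ftilde_def by (rule SUP_least) (auto intro: up)
    with lo R show ?thesis by (metis antisym)
  qed
qed


end
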